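(* Let $k\ge2$ and let $h$ be a positive integer. For $m\ge1$ put $g(m,h)=\sum_{d\mid m} c_d(h)/d$, and let $D_h(s)=\sum_{m\ge1} d_{k-1}(m)g(m,h)m^{-s}$. Then $D_h(s)$ converges absolutely for $\operatorname{Re}s>1$, and $\zeta(s)^{-(k-1)}D_h(s)$ extends to a holomorphic function on $\operatorname{Re}s>\frac12$ which is non-zero at $s=1$. Consequently $D_h(s)$ extends meromorphically to $\operatorname{Re}s>\frac12$, with its only pole at $s=1$, of order exactly $k-1$.
   Context: $c_d(h)=\sum_{a \bmod d,\ \gcd(a,d)=1} e(ah/d)$ is the Ramanujan sum, with $e(t)=e^{2\pi i t}$; $d_{k-1}(m)$ is the number of ordered $(k-1)$-tuples of positive integers with product $m$; $\zeta$ is the Riemann zeta function. *)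

theory Defs
  imports "HOL-Complex_Analysis.Complex_Analysis"
begin

definition e_fun :: "real \<Rightarrow> complex" where
  "e_fun t = exp (2 * of_real pi * \<i> * of_real t)"

definition ramanujan_sum :: "nat \<Rightarrow> int \<Rightarrow> complex" where
  "ramanujan_sum d h = (\<Sum>a\<in>{a. a < d \<and> coprime a d}. e_fun (real a * real_of_int h / real d))"

definition divisor_fun :: "nat \<Rightarrow> nat \<Rightarrow> nat" where
  "divisor_fun j m = card {xs :: nat list. length xs = j \<and> (\<forall>x\<in>set xs. 0 < x) \<and> prod_list xs = m}"

definition g_fun :: "nat \<Rightarrow> int \<Rightarrow> complex" where
  "g_fun m h = (\<Sum>d\<in>{d. d dvd m}. ramanujan_sum d h / of_nat d)"

text \<open>The m-th coefficient term of D_h(s) (the m = 0 term vanishes since d_{k-1}(0) = 0).\<close>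
definition D_term :: "nat \<Rightarrow> int \<Rightarrow> complex \<Rightarrow> nat \<Rightarrow> complex" where
  "D_term k h s m = of_nat (divisor_fun (k - 1) m) * g_fun m h / (of_nat m powr s)"

definition D_series :: "nat \<Rightarrow> int \<Rightarrow> complex \<Rightarrow> complex" where
  "D_series k h s = (\<Sum>m. D_term k h s m)"

text \<open>Riemann zeta as its Dirichlet series; only used for Re s > 1.\<close>
definition zeta_dirichlet :: "complex \<Rightarrow> complex" where
  "zeta_dirichlet s = (\<Sum>n. if n = 0 then 0 else 1 / (of_nat n powr s))"

end

theory Submission
  imports Defs "HOL-Number_Theory.Totient"
begin
definition multf :: "(nat \<Rightarrow> 'a::comm_semiring_1) \<Rightarrow> bool" where
  "multf f \<longleftrightarrow> f 1 = 1 \<and> (\<forall>m n. coprime m n \<longrightarrow> f (m*n) = f m * f n)"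

lemma divisors_mult_split:
  fixes F :: "nat \<Rightarrow> 'a::comm_monoid_add"
  assumes cop: "coprime m n" and "m > 0" "n > 0"
  shows "(\<Sum>d | d dvd m*n. F d) = (\<Sum>d1 | d1 dvd m. \<Sum>d2 | d2 dvd n. F (d1*d2))"
proof -
  have fin: "finite {d. d dvd m}" "finite {d. d dvd n}" using assms by auto
  have cp: "(\<Sum>d1 | d1 dvd m. \<Sum>d2 | d2 dvd n. F (d1*d2)) = (\<Sum>(x,y)\<in>{d. d dvd m} \<times> {d. d dvd n}. F (x*y))"
    by (rule sum.cartesian_product)
  have inj: "inj_on (\<lambda>(x,y). x*y) ({d. d dvd m} \<times> {d. d dvd n})"
  proof (rule inj_onI, clarsimp)
      fix a1 b1 a2 b2 :: nat
      assume h: "a1 dvd m" "b1 dvd n" "a2 dvd m" "b2 dvd n" "a1 * b1 = a2 * b2"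
      have c1: "coprime a1 b2" using coprime_divisors[OF h(1) h(4) cop] .
      have c2: "coprime a2 b1" using coprime_divisors[OF h(3) h(2) cop] .
      have "a1 dvd a2 * b2" using h(5) by (metis dvd_triv_left)
      hence "a1 dvd a2" using c1 by (simp add: coprime_dvd_mult_left_iff)
      moreover have "a2 dvd a1 * b1" using h(5) by (metis dvd_triv_left)
      hence "a2 dvd a1" using c2 by (simp add: coprime_dvd_mult_left_iff)
      ultimately have "a1 = a2" by (rule dvd_antisym)
      moreover have "a1 \<noteq> 0" using h(1) assms(2) by auto
      ultimately show "a1 = a2 \<and> b1 = b2" using h(5) by simp
  qed
  have "(\<Sum>(x,y)\<in>{d. d dvd m} \<times> {d. d dvd n}. F (x*y)) = (\<Sum>d\<in>(\<lambda>(x,y). x*y) ` ({d. d dvd m} \<times> {d. d dvd n}). F d)"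
    by (subst sum.reindex[OF inj]) (simp add: case_prod_unfold comp_def)
  also have "(\<lambda>(x,y). x*y) ` ({d. d dvd m} \<times> {d. d dvd n}) = {d. d dvd m*n}"
  proof (rule set_eqI, rule iffI)
    fix d assume "d \<in> (\<lambda>(x,y). x*y) ` ({d. d dvd m} \<times> {d. d dvd n})"
    thus "d \<in> {d. d dvd m*n}" by (auto intro: mult_dvd_mono)
  next
    fix d assume "d \<in> {d. d dvd m*n}"
    then obtain x y where "d = x*y" "x dvd m" "y dvd n" using division_decomp by blast
    thus "d \<in> (\<lambda>(x,y). x*y) ` ({d. d dvd m} \<times> {d. d dvd n})" by force
  qed
  finally show ?thesis using cp by simp
qed

lemma dvd_div_pos: "0 < (m::nat) \<Longrightarrow> x dvd m \<Longrightarrow> 0 < m div x"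
  by (auto elim!: dvdE)

lemma div_dvd_self': "(x::nat) dvd m \<Longrightarrow> m div x dvd m"
  by (auto elim!: dvdE)

definition Ls :: "nat \<Rightarrow> nat \<Rightarrow> nat list set" where
  "Ls j m = {xs. length xs = j \<and> (\<forall>x\<in>set xs. 0 < x) \<and> prod_list xs = m}"

lemma divisor_fun_Ls: "divisor_fun j m = card (Ls j m)"
  by (simp add: divisor_fun_def Ls_def)

lemma Ls_finite: assumes "m > 0" shows "finite (Ls j m)"
proof -
  have "Ls j m \<subseteq> {xs. set xs \<subseteq> {..m} \<and> length xs = j}"
  proof
    fix xs assume "xs \<in> Ls j m"
    hence "length xs = j" "prod_list xs = m" by (auto simp: Ls_def)
    moreover have "x \<le> m" if "x \<in> set xs" for x
      using prod_list_dvd[OF that] assms \<open>prod_list xs = m\<close> by (auto intro: dvd_imp_le)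
    ultimately show "xs \<in> {xs. set xs \<subseteq> {..m} \<and> length xs = j}" by auto
  qed
  thus ?thesis by (rule finite_subset) (rule finite_lists_length_eq, simp)
qed

lemma divisor_fun_0: "divisor_fun 0 m = (if m = 1 then 1 else 0)"
proof -
  have "Ls 0 m = (if m = 1 then {[]} else {})" by (auto simp: Ls_def)
  thus ?thesis by (simp add: divisor_fun_Ls)
qed

lemma divisor_fun_Suc:
  assumes "m > 0"
  shows "divisor_fun (Suc j) m = (\<Sum>x | x dvd m. divisor_fun j (m div x))"
proof -
  have eq: "Ls (Suc j) m = (\<lambda>(x,xs). x#xs) ` (SIGMA x:{x. x dvd m}. Ls j (m div x))"
  proof (rule set_eqI, rule iffI)
    fix xs assume "xs \<in> Ls (Suc j) m"
    then obtain x ys where xs: "xs = x # ys" and l: "length ys = j" and pos: "x > 0" "\<forall>y\<in>set ys. 0 < y"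
      and pr: "x * prod_list ys = m"
      by (cases xs) (auto simp: Ls_def)
    have "x dvd m" using pr by (metis dvd_triv_left)
    moreover have "prod_list ys = m div x" using pr pos by auto
    ultimately show "xs \<in> (\<lambda>(x,xs). x#xs) ` (SIGMA x:{x. x dvd m}. Ls j (m div x))"
      using xs l pos by (auto simp: Ls_def image_iff)
  next
    fix xs assume "xs \<in> (\<lambda>(x,xs). x#xs) ` (SIGMA x:{x. x dvd m}. Ls j (m div x))"
    then obtain x ys where xs: "xs = x # ys" and d: "x dvd m" and ys: "ys \<in> Ls j (m div x)" by auto
    have "x > 0" using d assms by (auto intro: Nat.gr0I)
    thus "xs \<in> Ls (Suc j) m" using xs d ys by (auto simp: Ls_def)
  qed
  have inj: "inj_on (\<lambda>(x,xs). x#xs) (SIGMA x:{x. x dvd m}. Ls j (m div x))"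
    by (auto simp: inj_on_def)
  have fin: "finite {x. x dvd m}" using assms by simp
  have fin2: "\<forall>x\<in>{x. x dvd m}. finite (Ls j (m div x))"
    using assms by (auto intro!: Ls_finite simp: dvd_div_pos)
  show ?thesis
    unfolding divisor_fun_Ls eq card_image[OF inj] card_SigmaI[OF fin fin2] by simp
qed

lemma divisor_fun_one: "divisor_fun j 1 = 1"
  by (induction j) (simp_all add: divisor_fun_0 divisor_fun_Suc)

lemma divisor_fun_Suc0 [simp]: "divisor_fun j (Suc 0) = 1"
  using divisor_fun_one[of j] by simp

lemma divisor_fun_mult:
  assumes "coprime m n" "m > 0" "n > 0"
  shows "divisor_fun j (m*n) = divisor_fun j m * divisor_fun j n"
  using assms
proof (induction j arbitrary: m n)
  case 0 thus ?case by (simp add: divisor_fun_0)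
next
  case (Suc j)
  have "divisor_fun (Suc j) (m*n) = (\<Sum>x | x dvd m*n. divisor_fun j (m*n div x))"
    using Suc.prems by (simp add: divisor_fun_Suc)
  also have "\<dots> = (\<Sum>x1 | x1 dvd m. \<Sum>x2 | x2 dvd n. divisor_fun j (m*n div (x1*x2)))"
    by (rule divisors_mult_split) (use Suc.prems in auto)
  also have "\<dots> = (\<Sum>x1 | x1 dvd m. \<Sum>x2 | x2 dvd n. divisor_fun j (m div x1) * divisor_fun j (n div x2))"
  proof (intro sum.cong refl, clarsimp)
    fix x1 x2 assume h: "x1 dvd m" "x2 dvd n"
    have e: "m*n div (x1*x2) = (m div x1) * (n div x2)" using h by (simp add: div_mult_div_if_dvd)
    have "coprime (m div x1) (n div x2)"
      by (rule coprime_divisors[OF _ _ Suc.prems(1)]) (use h in \<open>auto intro: div_dvd_self'\<close>)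
    moreover have "m div x1 > 0" "n div x2 > 0" using h Suc.prems by (auto simp: dvd_div_pos)
    ultimately show "divisor_fun j (m * n div (x1 * x2)) = divisor_fun j (m div x1) * divisor_fun j (n div x2)"
      using Suc.IH e by simp
  qed
  also have "\<dots> = (\<Sum>x1 | x1 dvd m. divisor_fun j (m div x1)) * (\<Sum>x2 | x2 dvd n. divisor_fun j (n div x2))"
    by (simp add: sum_product)
  also have "\<dots> = divisor_fun (Suc j) m * divisor_fun (Suc j) n"
    using Suc.prems by (simp add: divisor_fun_Suc)
  finally show ?case .
qed

lemma multf_divisor_fun: "multf (\<lambda>n. (of_nat (divisor_fun j n) :: 'a::comm_semiring_1))"
  unfolding multf_def
proof (intro conjI allI impI)
  show "(of_nat (divisor_fun j 1) :: 'a) = 1" using divisor_fun_one[of j] by simp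
  fix m n :: nat assume c: "coprime m n"
  show "(of_nat (divisor_fun j (m*n)) :: 'a) = of_nat (divisor_fun j m) * of_nat (divisor_fun j n)"
  proof (cases "m = 0 \<or> n = 0")
    case True
    with c have "m = 1 \<or> n = 1" by auto
    thus ?thesis by (auto simp: divisor_fun_one)
  next
    case False thus ?thesis using divisor_fun_mult[OF c] by simp
  qed
qed

lemma divisor_fun_Suc_primepow:
  assumes "prime p"
  shows "divisor_fun (Suc j) (p^a) = (\<Sum>i\<le>a. divisor_fun j (p^(a-i)))"
proof -
  have p: "p > 1" using assms prime_gt_1_nat by blast
  have "divisor_fun (Suc j) (p^a) = (\<Sum>x | x dvd p^a. divisor_fun j (p^a div x))"
    using p by (simp add: divisor_fun_Suc)
  also have "{x. x dvd p^a} = (\<lambda>i. p^i) ` {..a}"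
    using divides_primepow_nat[OF assms] by auto
  also have "(\<Sum>x\<in>(\<lambda>i. p^i) ` {..a}. divisor_fun j (p^a div x)) = (\<Sum>i\<le>a. divisor_fun j (p^a div p^i))"
    by (rule sum.reindex_cong[where l="\<lambda>i. p^i"]) (auto simp: inj_on_def power_inject_exp[OF p])
  also have "\<dots> = (\<Sum>i\<le>a. divisor_fun j (p^(a-i)))"
    using p by (intro sum.cong refl) (simp add: power_diff)
  finally show ?thesis .
qed

lemma divisor_fun_0_primepow:
  assumes "prime p" shows "divisor_fun 0 (p^a) = (if a = 0 then 1 else 0)"
proof -
  have "p > 1" using assms prime_gt_1_nat by blast
  thus ?thesis by (simp add: divisor_fun_0)
qed

lemma dpow_sums_real:
  assumes "prime p" "0 \<le> x" "x < 1"
  shows "(\<lambda>a. real (divisor_fun j (p^a)) * x^a) sums (1/(1-x))^j"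
proof (induction j)
  case 0
  have "(\<lambda>a. real (divisor_fun 0 (p^a)) * x^a) = (\<lambda>a. if a = 0 then 1 else 0)"
    using assms by (auto simp: divisor_fun_0_primepow)
  thus ?case using sums_single[of 0 "\<lambda>_. 1::real"] by simp
next
  case (Suc j)
  have g: "(\<lambda>i. x^i) sums (1/(1-x))" using geometric_sums[of x] assms by simp
  have "(\<lambda>i. norm (x^i)) = (\<lambda>i. x^i)" using assms(2) by (simp add: power_abs)
  hence s1: "summable (\<lambda>i. norm (x^i))" using sums_summable[OF g] by simp
  have "(\<lambda>i. norm (real (divisor_fun j (p^i)) * x^i)) = (\<lambda>i. real (divisor_fun j (p^i)) * x^i)"
    using assms(2) by (simp add: power_abs abs_mult)
  hence s2: "summable (\<lambda>i. norm (real (divisor_fun j (p^i)) * x^i))"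
    using sums_summable[OF Suc.IH] by simp
  have "(\<lambda>k. \<Sum>i\<le>k. x^i * (real (divisor_fun j (p^(k-i))) * x^(k-i))) sums
          ((\<Sum>i. x^i) * (\<Sum>i. real (divisor_fun j (p^i)) * x^i))"
    using Cauchy_product_sums[OF s1 s2] by simp
  also have "(\<lambda>k. \<Sum>i\<le>k. x^i * (real (divisor_fun j (p^(k-i))) * x^(k-i))) =
             (\<lambda>k. real (divisor_fun (Suc j) (p^k)) * x^k)"
  proof
    fix k
    have "(\<Sum>i\<le>k. x^i * (real (divisor_fun j (p^(k-i))) * x^(k-i))) =
          (\<Sum>i\<le>k. real (divisor_fun j (p^(k-i))) * x^k)"
      by (intro sum.cong refl) (simp add: power_add[symmetric])
    also have "\<dots> = real (divisor_fun (Suc j) (p^k)) * x^k"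
      by (simp add: divisor_fun_Suc_primepow[OF assms(1)] sum_distrib_right)
    finally show "(\<Sum>i\<le>k. x^i * (real (divisor_fun j (p^(k-i))) * x^(k-i))) =
          real (divisor_fun (Suc j) (p^k)) * x^k" .
  qed
  also have "(\<Sum>i. x^i) * (\<Sum>i. real (divisor_fun j (p^i)) * x^i) = (1/(1-x))^Suc j"
    using sums_unique[OF g] sums_unique[OF Suc.IH] by simp
  finally show ?case .
qed

lemma exp_2pi_eq_1_iff:
  "exp (2 * of_real pi * \<i> * of_real t) = 1 \<longleftrightarrow> (\<exists>k::int. t = of_int k)"
proof -
  have "exp (2 * of_real pi * \<i> * of_real t) = 1 \<longleftrightarrow> (\<exists>k::int. 2 * pi * t = of_int (2 * k) * pi)"
    by (simp add: exp_eq_1)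
  also have "\<dots> \<longleftrightarrow> (\<exists>k::int. t = of_int k)"
    by (intro ex_cong1) auto
  finally show ?thesis .
qed

lemma e_fun_sum_geom:
  assumes "n > 0"
  shows "(\<Sum>c<n. e_fun (real c * real_of_int h / real n)) = (if int n dvd h then of_nat n else 0)"
proof -
  define \<omega> where "\<omega> = exp (2 * of_real pi * \<i> * of_real (real_of_int h / real n))"
  have pw: "e_fun (real c * real_of_int h / real n) = \<omega> ^ c" for c
  proof -
    have "e_fun (real c * real_of_int h / real n) = exp (of_nat c * (2 * of_real pi * \<i> * of_real (real_of_int h / real n)))"
      unfolding e_fun_def by (simp add: algebra_simps)
    also have "\<dots> = \<omega> ^ c" unfolding \<omega>_def by (rule exp_of_nat_mult)
    finally show ?thesis .
  qed
  have wn: "\<omega> ^ n = 1"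
  proof -
    have "\<omega> ^ n = exp (of_nat n * (2 * of_real pi * \<i> * of_real (real_of_int h / real n)))"
      unfolding \<omega>_def by (rule exp_of_nat_mult[symmetric])
    also have "of_nat n * (2 * of_real pi * \<i> * of_real (real_of_int h / real n)) = 2 * of_real pi * \<i> * of_real (real_of_int h)"
      using assms by (simp add: field_simps)
    also have "exp \<dots> = 1" by (subst exp_2pi_eq_1_iff) auto
    finally show ?thesis .
  qed
  show ?thesis
  proof (cases "int n dvd h")
    case True
    then obtain k where k: "h = int n * k" by (elim dvdE)
    have "real_of_int h / real n = of_int k" using assms k by (simp add: field_simps)
    hence "\<omega> = 1" unfolding \<omega>_def by (subst exp_2pi_eq_1_iff) auto
    thus ?thesis using True by (simp add: pw)
  next
    case False
    have "\<omega> \<noteq> 1"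
    proof
      assume "\<omega> = 1"
      then obtain k :: int where "real_of_int h / real n = of_int k" unfolding \<omega>_def exp_2pi_eq_1_iff by blast
      hence "real_of_int h = real_of_int (int n * k)" using assms by (simp add: field_simps)
      hence "h = int n * k" by linarith
      thus False using False by simp
    qed
    hence "(\<Sum>c<n. \<omega> ^ c) = 0" using wn by (simp add: geometric_sum)
    thus ?thesis using False by (simp add: pw)
  qed
qed

definition gr :: "nat \<Rightarrow> nat \<Rightarrow> real" where
  "gr H m = (\<Sum>e | e dvd m \<and> m div e dvd H. real (totient e) / real e)"

lemma g_step1:
  assumes "m > 0"
  shows "g_fun m h = (\<Sum>b<m. of_nat (gcd b m) / of_nat m * e_fun (real b * real_of_int h / real m))"
proof -
  define S where "S = (SIGMA d:{d. d dvd m}. {a. a < d \<and> coprime a d})"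
  have fin: "finite {d. d dvd m}" using assms by simp
  have "g_fun m h = (\<Sum>d\<in>{d. d dvd m}. \<Sum>a\<in>{a. a < d \<and> coprime a d}. e_fun (real a * real_of_int h / real d) / of_nat d)"
    unfolding g_fun_def ramanujan_sum_def by (simp add: sum_divide_distrib)
  also have "\<dots> = (\<Sum>(d,a)\<in>S. e_fun (real a * real_of_int h / real d) / of_nat d)"
    unfolding S_def by (rule sum.Sigma) (use fin in auto)
  also have "\<dots> = (\<Sum>b<m. of_nat (gcd b m) / of_nat m * e_fun (real b * real_of_int h / real m))"
  proof (rule sum.reindex_bij_witness[where j="\<lambda>(d,a). a * (m div d)" and i="\<lambda>b. (m div gcd b m, b div gcd b m)"])
    fix da assume "da \<in> S"
    then obtain d a where da: "da = (d,a)" and d: "d dvd m" and a: "a < d" and c: "coprime a d"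
      unfolding S_def by auto
    obtain q where q: "m = d * q" using d by (elim dvdE)
    have dq: "d > 0" "q > 0" using q assms by auto
    have g: "gcd (a*q) m = q" using c q by (simp add: gcd_mult_right[symmetric] mult.commute)
      (metis coprime_iff_gcd_eq_1 gcd_mult_distrib_nat mult.commute mult.right_neutral)
    have mq: "m div d = q" using q dq by simp
    show "(\<lambda>b. (m div gcd b m, b div gcd b m)) ((\<lambda>(d,a). a * (m div d)) da) = da"
      using g mq dq q da by simp
    show "(\<lambda>(d,a). a * (m div d)) da \<in> {..<m}"
      using mq dq q da a by simp
    show "of_nat (gcd ((\<lambda>(d,a). a * (m div d)) da) m) / of_nat m * e_fun (real ((\<lambda>(d,a). a * (m div d)) da) * real_of_int h / real m)
          = (\<lambda>(d,a). e_fun (real a * real_of_int h / real d) / of_nat d) da"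
    proof -
      have "real (a*q) * real_of_int h / real m = real a * real_of_int h / real d"
        using q dq by (simp add: field_simps)
      moreover have "(of_nat q :: complex) / of_nat m = 1 / of_nat d"
        using q dq by (simp add: field_simps)
      ultimately show ?thesis using mq g da by simp
    qed
  next
    fix b assume "b \<in> {..<m}"
    hence b: "b < m" by simp
    define g where "g = gcd b m"
    have gpos: "g > 0" using assms g_def by simp
    have gb: "g dvd b" and gm: "g dvd m" using g_def by auto
    obtain x where x: "b = g * x" using gb by (elim dvdE)
    obtain y where y: "m = g * y" using gm by (elim dvdE)
    have ypos: "y > 0" using y assms by auto
    have xy: "x < y" using b x y gpos by simp
    have mdg: "m div g = y" "b div g = x" using x y gpos by auto
    have mdy: "m div y = g" using y ypos by simp
    have ib: "(\<lambda>b. (m div gcd b m, b div gcd b m)) b = (y, x)" using mdg by (simp add: g_def)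
    show "(\<lambda>(d,a). a * (m div d)) ((\<lambda>b. (m div gcd b m, b div gcd b m)) b) = b"
      unfolding ib using mdy x by simp
    have cop: "coprime (b div g) (m div g)" unfolding g_def using assms by (intro div_gcd_coprime) auto
    hence cop': "coprime x y" using mdg by simp
    show "(\<lambda>b. (m div gcd b m, b div gcd b m)) b \<in> S"
      unfolding ib S_def using cop' xy y by auto
  qed
  finally show ?thesis .
qed

lemma g_step2:
  fixes X :: "nat \<Rightarrow> complex"
  assumes "m > 0"
  shows "(\<Sum>b<m. of_nat (gcd b m) / of_nat m * X b) =
         (\<Sum>e | e dvd m. of_nat (totient e) / of_nat m * (\<Sum>b\<in>{b\<in>{..<m}. e dvd b}. X b))"
proof -
  have gcd_eq: "gcd b m = (\<Sum>e\<in>{e\<in>{e. e dvd m}. e dvd b}. totient e)" for b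
  proof -
    have "{e. e dvd gcd b m} = {e\<in>{e. e dvd m}. e dvd b}" by auto
    thus ?thesis using totient_divisor_sum[of "gcd b m"] by simp
  qed
  have "(\<Sum>b<m. of_nat (gcd b m) / of_nat m * X b) =
        (\<Sum>b<m. \<Sum>e\<in>{e\<in>{e. e dvd m}. e dvd b}. of_nat (totient e) / of_nat m * X b)"
    by (simp only: gcd_eq of_nat_sum sum_divide_distrib sum_distrib_right)
  also have "\<dots> = (\<Sum>e\<in>{e. e dvd m}. \<Sum>b\<in>{b\<in>{..<m}. e dvd b}. of_nat (totient e) / of_nat m * X b)"
    by (rule sum.swap_restrict[symmetric]) (use assms in auto)
  also have "\<dots> = (\<Sum>e | e dvd m. of_nat (totient e) / of_nat m * (\<Sum>b\<in>{b\<in>{..<m}. e dvd b}. X b))"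
    by (simp add: sum_distrib_left)
  finally show ?thesis .
qed

lemma g_step3:
  assumes "m > 0" "e dvd m"
  shows "(\<Sum>b\<in>{b\<in>{..<m}. e dvd b}. e_fun (real b * real_of_int h / real m)) =
         (if int (m div e) dvd h then of_nat (m div e) else 0)"
proof -
  obtain q where q: "m = e*q" using assms(2) by (elim dvdE)
  have pos: "e > 0" "q > 0" using q assms(1) by auto
  have mq: "m div e = q" using q pos by simp
  have set: "{b\<in>{..<m}. e dvd b} = (\<lambda>c. e*c) ` {..<q}"
  proof (rule set_eqI, rule iffI)
    fix b assume "b \<in> {b\<in>{..<m}. e dvd b}"
    then obtain c where "b = e*c" "e*c < e*q" using q by (auto elim!: dvdE)
    thus "b \<in> (\<lambda>c. e*c) ` {..<q}" by auto
  next
    fix b assume "b \<in> (\<lambda>c. e*c) ` {..<q}"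
    thus "b \<in> {b\<in>{..<m}. e dvd b}" using q pos by auto
  qed
  have inj: "inj_on (\<lambda>c. e*c) {..<q}" using pos by (auto simp: inj_on_def)
  have "(\<Sum>b\<in>{b\<in>{..<m}. e dvd b}. e_fun (real b * real_of_int h / real m)) =
        (\<Sum>c<q. e_fun (real (e*c) * real_of_int h / real m))"
    unfolding set by (subst sum.reindex[OF inj]) simp
  also have "\<dots> = (\<Sum>c<q. e_fun (real c * real_of_int h / real q))"
  proof (intro sum.cong refl)
    fix c
    have "real (e*c) * real_of_int h / real m = real c * real_of_int h / real q"
      using q pos by (simp add: field_simps)
    thus "e_fun (real (e*c) * real_of_int h / real m) = e_fun (real c * real_of_int h / real q)" by simp
  qed
  also have "\<dots> = (if int q dvd h then of_nat q else 0)" by (rule e_fun_sum_geom) (use pos in auto)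
  finally show ?thesis using mq by simp
qed

lemma g_formula:
  assumes "m > 0" "h > 0"
  shows "g_fun m h = of_real (gr (nat h) m)"
proof -
  have "g_fun m h = (\<Sum>e | e dvd m. of_nat (totient e) / of_nat m *
                       (if int (m div e) dvd h then of_nat (m div e) else 0))"
    using g_step1[OF assms(1)] g_step2[OF assms(1)] g_step3[OF assms(1)] by simp
  also have "\<dots> = (\<Sum>e | e dvd m. if m div e dvd nat h then of_real (real (totient e) / real e) else 0)"
  proof (intro sum.cong refl)
    fix e assume "e \<in> {e. e dvd m}"
    hence e: "e dvd m" by simp
    obtain q where q: "m = e*q" using e by (elim dvdE)
    have pos: "e > 0" "q > 0" using q assms(1) by auto
    have mq: "m div e = q" using q pos by simp
    have hh: "h = int (nat h)" using assms(2) by simp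
    have "int q dvd h \<longleftrightarrow> q dvd nat h" by (subst hh) (simp only: int_dvd_int_iff)
    moreover have "(of_nat (totient e) / of_nat m * of_nat q :: complex) = of_real (real (totient e) / real e)"
      using q pos by (simp add: field_simps)
    ultimately show "of_nat (totient e) / of_nat m * (if int (m div e) dvd h then of_nat (m div e) else 0) =
          (if m div e dvd nat h then of_real (real (totient e) / real e) else (0::complex))"
      using mq by simp
  qed
  also have "\<dots> = of_real (gr (nat h) m)"
  proof -
    have "{e. e dvd m \<and> m div e dvd nat h} = {e\<in>{e. e dvd m}. m div e dvd nat h}" by auto
    hence "gr (nat h) m = (\<Sum>e\<in>{e\<in>{e. e dvd m}. m div e dvd nat h}. real (totient e) / real e)"
      unfolding gr_def by simp
    also have "\<dots> = (\<Sum>e\<in>{e. e dvd m}. if m div e dvd nat h then real (totient e) / real e else 0)"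
      by (rule sum.inter_filter) (use assms(1) in simp)
    finally have "gr (nat h) m = (\<Sum>e\<in>{e. e dvd m}. if m div e dvd nat h then real (totient e) / real e else 0)" .
    thus ?thesis by (simp add: of_real_sum if_distrib cong: if_cong)
  qed
  finally show ?thesis .
qed

abbreviation asm :: "('a \<Rightarrow> 'b::{banach,second_countable_topology}) \<Rightarrow> 'a set \<Rightarrow> bool" where
  "asm f A \<equiv> Infinite_Set_Sum.abs_summable_on f A"

lemma gr_alt:
  assumes "m > 0"
  shows "gr H m = (\<Sum>e | e dvd m. if m div e dvd H then real (totient e) / real e else 0)"
proof -
  have "{e. e dvd m \<and> m div e dvd H} = {e\<in>{e. e dvd m}. m div e dvd H}" by auto
  hence "gr H m = (\<Sum>e\<in>{e\<in>{e. e dvd m}. m div e dvd H}. real (totient e) / real e)"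
    unfolding gr_def by simp
  also have "\<dots> = (\<Sum>e\<in>{e. e dvd m}. if m div e dvd H then real (totient e) / real e else 0)"
    by (rule sum.inter_filter) (use assms in simp)
  finally show ?thesis .
qed

lemma gr_nonneg: "gr H m \<ge> 0"
  unfolding gr_def by (intro sum_nonneg) auto

lemma gr_one: "gr H 1 = 1"
proof -
  have "{e. e dvd 1 \<and> 1 div e dvd H} = {1}" by auto
  thus ?thesis unfolding gr_def by simp
qed

lemma gr_Suc0 [simp]: "gr H (Suc 0) = 1"
  using gr_one[of H] by simp

lemma gr_bound:
  assumes "H > 0"
  shows "gr H m \<le> real H"
proof -
  have "gr H m \<le> (\<Sum>e | e dvd m \<and> m div e dvd H. 1)"
    unfolding gr_def
  proof (rule sum_mono)
    fix e assume "e \<in> {e. e dvd m \<and> m div e dvd H}"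
    show "real (totient e) / real e \<le> 1"
      by (cases "e = 0") (auto simp: totient_le)
  qed
  also have "\<dots> = real (card {e. e dvd m \<and> m div e dvd H})" by simp
  also have "card {e. e dvd m \<and> m div e dvd H} \<le> card {d. d dvd H}"
  proof (cases "m = 0")
    case True
    hence e: "{e. e dvd m \<and> m div e dvd H} = {}" using assms by auto
    show ?thesis unfolding e by simp
  next
    case False
    have inj: "inj_on (\<lambda>e. m div e) {e. e dvd m \<and> m div e dvd H}"
    proof (rule inj_onI, clarsimp)
      fix x y assume "x dvd m" "y dvd m"
      assume "m div x = m div y"
      have "x * (m div x) = m" "y * (m div y) = m" using \<open>x dvd m\<close> \<open>y dvd m\<close> by simp_all
      moreover have "m div x \<noteq> 0" using \<open>x dvd m\<close> False by (auto elim!: dvdE)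
      ultimately show "x = y" using \<open>m div x = m div y\<close> by (metis mult_right_cancel)
    qed
    have sub: "(\<lambda>e. m div e) ` {e. e dvd m \<and> m div e dvd H} \<subseteq> {d. d dvd H}" by auto
    show ?thesis by (rule card_inj_on_le[OF inj sub]) (use assms in simp)
  qed
  also have "card {d. d dvd H} \<le> card {1..H}"
    using assms by (intro card_mono) (auto intro: dvd_imp_le Nat.gr0I)
  finally show ?thesis by simp
qed

lemma gr_mult:
  assumes "coprime m n" "m > 0" "n > 0"
  shows "gr H (m*n) = gr H m * gr H n"
proof -
  have "gr H (m*n) = (\<Sum>e | e dvd m*n. if m*n div e dvd H then real (totient e) / real e else 0)"
    using assms by (simp add: gr_alt)
  also have "\<dots> = (\<Sum>e1 | e1 dvd m. \<Sum>e2 | e2 dvd n.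
       if m*n div (e1*e2) dvd H then real (totient (e1*e2)) / real (e1*e2) else 0)"
    by (rule divisors_mult_split) (use assms in auto)
  also have "\<dots> = (\<Sum>e1 | e1 dvd m. \<Sum>e2 | e2 dvd n.
       (if m div e1 dvd H then real (totient e1) / real e1 else 0) *
       (if n div e2 dvd H then real (totient e2) / real e2 else 0))"
  proof (intro sum.cong refl)
    fix e1 e2 assume h0: "e1 \<in> {e. e dvd m}" "e2 \<in> {e. e dvd n}"
    hence h: "e1 dvd m" "e2 dvd n" by simp_all
    have e: "m*n div (e1*e2) = (m div e1) * (n div e2)" using h by (simp add: div_mult_div_if_dvd)
    have c1: "coprime (m div e1) (n div e2)"
      by (rule coprime_divisors[OF _ _ assms(1)]) (use h in \<open>auto intro: div_dvd_self'\<close>)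
    have c2: "coprime e1 e2" by (rule coprime_divisors[OF h assms(1)])
    have dv: "(m div e1) * (n div e2) dvd H \<longleftrightarrow> m div e1 dvd H \<and> n div e2 dvd H"
      using c1 by (auto intro: divides_mult dest: dvd_mult_left dvd_mult_right)
    have t: "real (totient (e1*e2)) / real (e1*e2) = (real (totient e1) / real e1) * (real (totient e2) / real e2)"
      using c2 by (simp add: totient_mult_coprime)
    show "(if m * n div (e1 * e2) dvd H then real (totient (e1 * e2)) / real (e1 * e2) else 0) =
          (if m div e1 dvd H then real (totient e1) / real e1 else 0) *
          (if n div e2 dvd H then real (totient e2) / real e2 else 0)"
      using e dv t by auto
  qed
  also have "\<dots> = gr H m * gr H n"
    using assms by (simp add: gr_alt sum_product)
  finally show ?thesis .
qed

lemma gr_primepow: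
  assumes "prime p" "\<not> p dvd H" "a > 0"
  shows "gr H (p^a) = 1 - 1 / real p"
proof -
  have p: "p > 1" using assms prime_gt_1_nat by blast
  have "{e. e dvd p^a \<and> p^a div e dvd H} = {p^a}"
  proof (rule set_eqI, rule iffI)
    fix e assume "e \<in> {e. e dvd p^a \<and> p^a div e dvd H}"
    then obtain i where i: "i \<le> a" "e = p^i" and d: "p^a div p^i dvd H"
      using divides_primepow_nat[OF assms(1)] by auto
    have "p^a div p^i = p^(a-i)" using p i by (simp add: power_diff)
    hence "p^(a-i) dvd H" using d by simp
    have "a - i = 0"
    proof (rule ccontr)
      assume "a - i \<noteq> 0"
      hence "p dvd p^(a-i)" by (cases "a-i") auto
      thus False using \<open>p^(a-i) dvd H\<close> assms(2) dvd_trans by blast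
    qed
    thus "e \<in> {p^a}" using i by simp
  qed (use p in auto)
  hence "gr H (p^a) = real (totient (p^a)) / real (p^a)" unfolding gr_def by simp
  also have "\<dots> = real (p^(a-1) * (p-1)) / real (p^a)" using assms by (simp add: totient_prime_power)
  also have "\<dots> = 1 - 1 / real p"
  proof -
    have "p^a = p^(a-1) * p" using assms(3) by (cases a) auto
    thus ?thesis using p by (simp add: field_simps of_nat_diff)
  qed
  finally show ?thesis .
qed

definition af :: "nat \<Rightarrow> nat \<Rightarrow> nat \<Rightarrow> complex" where
  "af k H m = of_nat (divisor_fun (k-1) m) * of_real (gr H m)"

lemma multf_af: "multf (af k H)"
  unfolding multf_def
proof (intro conjI allI impI)
  show "af k H 1 = 1" by (simp add: af_def gr_one divisor_fun_one)
  fix m n :: nat assume c: "coprime m n"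
  show "af k H (m*n) = af k H m * af k H n"
  proof (cases "m = 0 \<or> n = 0")
    case True
    with c have "m = 1 \<or> n = 1" by auto
    thus ?thesis by (auto simp: af_def gr_one divisor_fun_one)
  next
    case False thus ?thesis using divisor_fun_mult[OF c] gr_mult[OF c] by (simp add: af_def)
  qed
qed

definition smooth :: "nat set \<Rightarrow> nat set" where
  "smooth P = {n. n > 0 \<and> prime_factors n \<subseteq> P}"

lemma multf_prod:
  assumes "multf f" "finite P" "\<forall>p\<in>P. prime p"
  shows "f (\<Prod>p\<in>P. p ^ e p) = (\<Prod>p\<in>P. f (p ^ e p))"
  using assms(2,3)
proof (induction P rule: finite_induct)
  case empty thus ?case using assms(1) by (simp add: multf_def)
next
  case (insert q P)
  have "coprime (q ^ e q) (\<Prod>p\<in>P. p ^ e p)"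
  proof (cases "e q = 0")
    case False
    have "coprime q (p ^ e p)" if "p \<in> P" for p
      using insert that by (auto intro: primes_coprime)
    thus ?thesis using False by (auto intro!: prod_coprime_right)
  qed simp
  thus ?case using insert assms(1) unfolding multf_def by simp
qed

lemma wmult_prod:
  assumes "\<And>m n. w (m*n) = w m * w n" "w 1 = 1"
  shows "w (\<Prod>p\<in>P. g p) = (\<Prod>p\<in>P. w (g p))"
  by (induction P rule: infinite_finite_induct) (auto simp: assms)

lemma wmult_power:
  assumes "\<And>m n. w (m*n) = w m * w n" "w 1 = 1"
  shows "w (p ^ a) = w p ^ a"
  by (induction a) (auto simp: assms)

lemma FE:
  fixes f w :: "nat \<Rightarrow> 'c::{real_normed_field,banach,second_countable_topology}"
  assumes f: "multf f" and w: "\<And>m n. w (m*n) = w m * w n" "w 1 = 1"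
    and P: "finite P" "\<And>p. p\<in>P \<Longrightarrow> prime p"
    and sm: "\<And>p. p\<in>P \<Longrightarrow> asm (\<lambda>a. f (p^a) * w p ^ a) UNIV"
  shows "asm (\<lambda>n. f n * w n) (smooth P) \<and>
         infsetsum (\<lambda>n. f n * w n) (smooth P) = (\<Prod>p\<in>P. infsetsum (\<lambda>a. f (p^a) * w p ^ a) UNIV)"
proof -
  define \<phi> where "\<phi> \<alpha> = (\<Prod>p\<in>P. p ^ \<alpha> p)" for \<alpha> :: "nat \<Rightarrow> nat"
  have mult: "multiplicity q (\<phi> \<alpha>) = (if q \<in> P then \<alpha> q else 0)" if "prime q" for q \<alpha>
    unfolding \<phi>_def using P that by (intro multiplicity_prod_prime_powers) auto
  have pos: "\<phi> \<alpha> > 0" for \<alpha>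
    unfolding \<phi>_def using P by (intro prod_pos) (auto dest: prime_gt_0_nat)
  have bij: "bij_betw \<phi> (PiE P (\<lambda>_. UNIV :: nat set)) (smooth P)"
  proof (rule bij_betwI')
    fix \<alpha> \<beta> assume ab: "\<alpha> \<in> PiE P (\<lambda>_. UNIV :: nat set)" "\<beta> \<in> PiE P (\<lambda>_. UNIV :: nat set)"
    show "(\<phi> \<alpha> = \<phi> \<beta>) = (\<alpha> = \<beta>)"
    proof
      assume eq: "\<phi> \<alpha> = \<phi> \<beta>"
      have "\<alpha> p = \<beta> p" for p
      proof (cases "p \<in> P")
        case True
        have "\<alpha> p = multiplicity p (\<phi> \<alpha>)" using mult[of p \<alpha>] P(2)[OF True] True by simp
        also have "\<dots> = multiplicity p (\<phi> \<beta>)" using eq by simp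
        also have "\<dots> = \<beta> p" using mult[of p \<beta>] P(2)[OF True] True by simp
        finally show ?thesis .
      next
        case False thus ?thesis using PiE_arb[OF ab(1) False] PiE_arb[OF ab(2) False] by simp
      qed
      thus "\<alpha> = \<beta>" by (simp add: fun_eq_iff)
    qed simp
  next
    fix \<alpha> assume "\<alpha> \<in> PiE P (\<lambda>_. UNIV :: nat set)"
    have "prime_factors (\<phi> \<alpha>) \<subseteq> P"
    proof
      fix q assume q: "q \<in> prime_factors (\<phi> \<alpha>)"
      hence "prime q" "multiplicity q (\<phi> \<alpha>) \<noteq> 0" by (auto simp: prime_factors_multiplicity)
      thus "q \<in> P" using mult[OF \<open>prime q\<close>, of \<alpha>] by (auto split: if_splits)
    qed
    thus "\<phi> \<alpha> \<in> smooth P" using pos by (simp add: smooth_def)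
  next
    fix n assume n: "n \<in> smooth P"
    hence npos: "n > 0" and sub: "prime_factors n \<subseteq> P" by (auto simp: smooth_def)
    define \<alpha> where "\<alpha> = restrict (\<lambda>p. multiplicity p n) P"
    have "\<phi> \<alpha> = (\<Prod>p\<in>P. p ^ multiplicity p n)"
      unfolding \<phi>_def \<alpha>_def by (intro prod.cong refl) simp
    also have "\<dots> = (\<Prod>p\<in>prime_factors n. p ^ multiplicity p n)"
    proof (rule prod.mono_neutral_right[OF P(1) sub], rule ballI)
      fix p assume "p \<in> P - prime_factors n"
      hence "multiplicity p n = 0" using P(2) by (auto simp: prime_factors_multiplicity)
      thus "p ^ multiplicity p n = 1" by simp
    qed
    also have "\<dots> = n" by (rule prime_factorization_nat[OF npos, symmetric])
    finally have "n = \<phi> \<alpha>" by simp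
    moreover have "\<alpha> \<in> PiE P (\<lambda>_. UNIV :: nat set)" unfolding \<alpha>_def by simp
    ultimately show "\<exists>\<alpha>\<in>PiE P (\<lambda>_. UNIV :: nat set). n = \<phi> \<alpha>" by blast
  qed
  have trm: "f (\<phi> \<alpha>) * w (\<phi> \<alpha>) = (\<Prod>p\<in>P. f (p ^ \<alpha> p) * w p ^ \<alpha> p)" for \<alpha>
  proof -
    have "f (\<phi> \<alpha>) = (\<Prod>p\<in>P. f (p ^ \<alpha> p))" unfolding \<phi>_def using P by (intro multf_prod[OF f]) auto
    moreover have "w (\<phi> \<alpha>) = (\<Prod>p\<in>P. w p ^ \<alpha> p)"
      unfolding \<phi>_def by (simp add: wmult_prod[OF w] wmult_power[OF w])
    ultimately show ?thesis by (simp add: prod.distrib)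
  qed
  have s1: "asm (\<lambda>\<alpha>. \<Prod>p\<in>P. f (p ^ \<alpha> p) * w p ^ \<alpha> p) (PiE P (\<lambda>_. UNIV :: nat set))"
    by (rule abs_summable_on_prod_PiE[where f="\<lambda>p a. f (p^a) * w p ^ a" and B="\<lambda>_. UNIV"]) (use P sm in auto)
  have e1: "infsetsum (\<lambda>\<alpha>. \<Prod>p\<in>P. f (p ^ \<alpha> p) * w p ^ \<alpha> p) (PiE P (\<lambda>_. UNIV :: nat set)) =
            (\<Prod>p\<in>P. infsetsum (\<lambda>a. f (p^a) * w p ^ a) UNIV)"
    by (rule infsetsum_prod_PiE[where f="\<lambda>p a. f (p^a) * w p ^ a" and B="\<lambda>_. UNIV"]) (use P sm in auto)
  have "asm (\<lambda>n. f n * w n) (smooth P)"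
    using abs_summable_on_reindex_bij_betw[OF bij, of "\<lambda>n. f n * w n"] s1 trm by simp
  moreover have "infsetsum (\<lambda>n. f n * w n) (smooth P) = infsetsum (\<lambda>\<alpha>. f (\<phi> \<alpha>) * w (\<phi> \<alpha>)) (PiE P (\<lambda>_. UNIV :: nat set))"
    using infsetsum_reindex_bij_betw[OF bij, of "\<lambda>n. f n * w n"] by simp
  ultimately show ?thesis using e1 trm by simp
qed

lemma not_smooth_ge:
  assumes "n > 0" "n \<notin> smooth {p. prime p \<and> p < N}"
  shows "n \<ge> N"
proof -
  from assms obtain q where q: "q \<in> prime_factors n" "q \<notin> {p. prime p \<and> p < N}"
    by (auto simp: smooth_def)
  hence "prime q" "q dvd n" by (auto simp: in_prime_factors_iff)
  hence "q \<ge> N" using q by auto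
  moreover have "q \<le> n" using \<open>q dvd n\<close> assms(1) by (rule dvd_imp_le)
  ultimately show ?thesis by simp
qed

lemma euler_limit:
  fixes f w :: "nat \<Rightarrow> 'c::{real_normed_field,banach,second_countable_topology}"
  assumes f: "multf f" and w: "\<And>m n. w (m*n) = w m * w n" "w 1 = 1" "w 0 = 0"
    and sm: "asm (\<lambda>n. f n * w n) UNIV"
  shows "(\<lambda>N. \<Prod>p\<in>{p. prime p \<and> p < N}. infsetsum (\<lambda>a. f (p^a) * w p ^ a) UNIV)
           \<longlonglongrightarrow> infsetsum (\<lambda>n. f n * w n) UNIV"
proof -
  define t where "t n = f n * w n" for n
  have loc: "asm (\<lambda>a. f (p^a) * w p ^ a) UNIV" if "prime p" for p
  proof -
    have inj: "inj_on (\<lambda>a. p ^ a) UNIV"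
      using prime_gt_1_nat[OF that] by (auto simp: inj_on_def power_inject_exp)
    have "asm t (range (\<lambda>a. p^a))" using sm unfolding t_def by (rule abs_summable_on_subset) simp
    hence "asm (\<lambda>a. t (p^a)) UNIV" using abs_summable_on_reindex_iff[OF inj] by blast
    thus ?thesis unfolding t_def by (simp add: wmult_power[OF w(1,2)])
  qed
  define T where "T N = infsetsum (\<lambda>n. norm (t n)) (UNIV - {..<N})" for N
  have smn: "asm (\<lambda>n. norm (t n)) UNIV" using sm unfolding t_def by (rule abs_summable_on_normI)
  have T0: "T \<longlonglongrightarrow> 0"
  proof -
    have "(\<lambda>n. norm (t n)) sums infsetsum (\<lambda>n. norm (t n)) UNIV" by (rule sums_infsetsum_nat'[OF smn])
    hence "(\<lambda>N. \<Sum>n<N. norm (t n)) \<longlonglongrightarrow> infsetsum (\<lambda>n. norm (t n)) UNIV" by (simp add: sums_def)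
    hence "(\<lambda>N. infsetsum (\<lambda>n. norm (t n)) UNIV - (\<Sum>n<N. norm (t n))) \<longlonglongrightarrow>
             infsetsum (\<lambda>n. norm (t n)) UNIV - infsetsum (\<lambda>n. norm (t n)) UNIV"
      by (intro tendsto_diff tendsto_const)
    hence "(\<lambda>N. infsetsum (\<lambda>n. norm (t n)) UNIV - (\<Sum>n<N. norm (t n))) \<longlonglongrightarrow> 0" by simp
    moreover have "T N = infsetsum (\<lambda>n. norm (t n)) UNIV - (\<Sum>n<N. norm (t n))" for N
    proof -
      have "T N = infsetsum (\<lambda>n. norm (t n)) UNIV - infsetsum (\<lambda>n. norm (t n)) {..<N}"
        unfolding T_def by (rule infsetsum_Diff[OF smn]) simp
      thus ?thesis by simp
    qed
    hence "T = (\<lambda>N. infsetsum (\<lambda>n. norm (t n)) UNIV - (\<Sum>n<N. norm (t n)))" by (intro ext)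
    ultimately show ?thesis by simp
  qed
  have eq: "(\<Prod>p\<in>{p. prime p \<and> p < N}. infsetsum (\<lambda>a. f (p^a) * w p ^ a) UNIV) = infsetsum t (smooth {p. prime p \<and> p < N})" for N
  proof -
    have "finite {p. prime p \<and> p < N}" by simp
    from FE[OF f w(1,2) this] loc
    have "asm (\<lambda>n. f n * w n) (smooth {p. prime p \<and> p < N}) \<and>
         infsetsum (\<lambda>n. f n * w n) (smooth {p. prime p \<and> p < N}) =
         (\<Prod>p\<in>{p. prime p \<and> p < N}. infsetsum (\<lambda>a. f (p^a) * w p ^ a) UNIV)" by blast
    thus ?thesis unfolding t_def by simp
  qed
  have bound: "norm (infsetsum t (smooth {p. prime p \<and> p < N}) - infsetsum t UNIV) \<le> T N" for N
  proof -
    define S where "S = smooth {p. prime p \<and> p < N}"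
    have "infsetsum t UNIV - infsetsum t S = infsetsum t (UNIV - S)"
      using sm unfolding t_def by (subst infsetsum_Diff) auto
    hence "norm (infsetsum t S - infsetsum t UNIV) = norm (infsetsum t (UNIV - S))"
      by (simp add: norm_minus_commute)
    also have "\<dots> \<le> infsetsum (\<lambda>n. norm (t n)) (UNIV - S)" by (rule norm_infsetsum_bound)
    also have "\<dots> \<le> T N" unfolding T_def
    proof (rule infsetsum_mono_neutral)
      show "asm (\<lambda>n. norm (t n)) (UNIV - S)" by (rule abs_summable_on_subset[OF smn]) auto
      show "asm (\<lambda>n. norm (t n)) (UNIV - {..<N})" by (rule abs_summable_on_subset[OF smn]) auto
      fix n assume "n \<in> (UNIV - S) - (UNIV - {..<N})"
      hence "n \<notin> S" "n < N" by auto
      hence "n = 0" using not_smooth_ge[of n N] unfolding S_def by (cases "n = 0") auto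
      thus "norm (t n) \<le> 0" by (simp add: t_def w(3))
    qed auto
    finally show ?thesis unfolding S_def .
  qed
  have "(\<lambda>N. infsetsum t (smooth {p. prime p \<and> p < N}) - infsetsum t UNIV) \<longlonglongrightarrow> 0"
    by (rule Lim_null_comparison[OF _ T0]) (use bound in auto)
  hence "(\<lambda>N. infsetsum t (smooth {p. prime p \<and> p < N})) \<longlonglongrightarrow> infsetsum t UNIV"
    by (simp add: LIM_zero_iff)
  thus ?thesis using eq unfolding t_def by simp
qed

lemma holo_series:
  fixes f :: "nat \<Rightarrow> complex \<Rightarrow> complex"
  assumes S: "open S" and hol: "\<And>n. f n holomorphic_on S"
    and bd: "\<And>z. z \<in> S \<Longrightarrow> \<exists>r>0. cball z r \<subseteq> S \<and> (\<exists>M. summable M \<and> (\<forall>n. \<forall>w\<in>cball z r. norm (f n w) \<le> M n))"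
  shows "(\<lambda>s. \<Sum>n. f n s) holomorphic_on S"
proof (rule holomorphic_uniform_sequence[where f="\<lambda>N s. \<Sum>n<N. f n s"])
  show "open S" by fact
  show "(\<lambda>s. \<Sum>n<N. f n s) holomorphic_on S" for N
    by (intro holomorphic_on_sum) (use hol in auto)
  fix z assume "z \<in> S"
  from bd[OF this] obtain r M where r: "r > 0" "cball z r \<subseteq> S" and M: "summable M" "\<And>n w. w \<in> cball z r \<Longrightarrow> norm (f n w) \<le> M n"
    by blast
  have "uniform_limit (cball z r) (\<lambda>N s. \<Sum>n<N. f n s) (\<lambda>s. \<Sum>n. f n s) sequentially"
    by (rule Weierstrass_m_test[OF M(2) M(1)])
  thus "\<exists>d>0. cball z d \<subseteq> S \<and> uniform_limit (cball z d) (\<lambda>N s. \<Sum>n<N. f n s) (\<lambda>s. \<Sum>n. f n s) sequentially"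
    using r by blast
qed

lemma holo_prod:
  fixes f :: "nat \<Rightarrow> complex \<Rightarrow> complex"
  assumes S: "open S" and hol: "\<And>n. f n holomorphic_on S"
    and bd: "\<And>z. z \<in> S \<Longrightarrow> \<exists>r>0. cball z r \<subseteq> S \<and> (\<exists>M. summable M \<and>
               eventually (\<lambda>n. \<forall>w\<in>cball z r. norm (f n w - 1) \<le> M n) sequentially)"
  shows "(\<lambda>s. prodinf (\<lambda>n. f n s)) holomorphic_on S"
proof (rule holomorphic_uniform_sequence[where f="\<lambda>N s. \<Prod>n<N. f n s"])
  show "open S" by fact
  show "(\<lambda>s. \<Prod>n<N. f n s) holomorphic_on S" for N
    by (intro holomorphic_on_prod) (use hol in auto)
  fix z assume "z \<in> S"
  from bd[OF this] obtain r M where r: "r > 0" "cball z r \<subseteq> S" and M: "summable M"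
    "eventually (\<lambda>n. \<forall>w\<in>cball z r. norm (f n w - 1) \<le> M n) sequentially"
    by blast
  have uc: "uniformly_convergent_on (cball z r) (\<lambda>N s. \<Prod>n<N. f n s)"
  proof (rule uniformly_convergent_on_prod')
    show "continuous_on (cball z r) (f n)" for n
      using holomorphic_on_imp_continuous_on[OF hol[of n]] r(2) by (rule continuous_on_subset)
    show "compact (cball z r)" by simp
    show "uniformly_convergent_on (cball z r) (\<lambda>N s. \<Sum>n<N. norm (f n s - 1))"
      by (rule Weierstrass_m_test'_ev[OF _ M(1)]) (use M(2) in simp)
  qed
  then obtain g where g: "uniform_limit (cball z r) (\<lambda>N s. \<Prod>n<N. f n s) g sequentially"
    by (auto simp: uniformly_convergent_on_def)
  have "uniform_limit (cball z r) (\<lambda>N s. \<Prod>n<N. f n s) (\<lambda>s. prodinf (\<lambda>n. f n s)) sequentially"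
  proof (rule uniform_limit_cong[THEN iffD1, OF _ _ g])
    show "\<forall>\<^sub>F y in sequentially. \<forall>x\<in>cball z r. (\<Prod>n<y. f n x) = (\<Prod>n<y. f n x)" by simp
    fix s assume s: "s \<in> cball z r"
    have "summable (\<lambda>n. norm (f n s - 1))"
    proof (rule summable_comparison_test_ev[OF _ M(1)])
      show "\<forall>\<^sub>F n in sequentially. norm (norm (f n s - 1)) \<le> M n"
        using M(2) by eventually_elim (use s in auto)
    qed
    hence "convergent_prod (\<lambda>n. f n s)"
      by (intro abs_convergent_prod_imp_convergent_prod summable_imp_abs_convergent_prod)
    hence "(\<lambda>N. \<Prod>n\<le>N. f n s) \<longlonglongrightarrow> prodinf (\<lambda>n. f n s)" by (rule convergent_prod_LIMSEQ)
    hence "(\<lambda>N. \<Prod>n<Suc N. f n s) \<longlonglongrightarrow> prodinf (\<lambda>n. f n s)" by (simp add: lessThan_Suc_atMost)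
    hence l1: "(\<lambda>N. \<Prod>n<N. f n s) \<longlonglongrightarrow> prodinf (\<lambda>n. f n s)" by (rule LIMSEQ_imp_Suc)
    have l2: "(\<lambda>N. \<Prod>n<N. f n s) \<longlonglongrightarrow> g s" using tendsto_uniform_limitI[OF g s] .
    show "g s = prodinf (\<lambda>n. f n s)" using LIMSEQ_unique[OF l2 l1] .
  qed
  thus "\<exists>d>0. cball z d \<subseteq> S \<and> uniform_limit (cball z d) (\<lambda>N s. \<Prod>n<N. f n s) (\<lambda>s. prodinf (\<lambda>n. f n s)) sequentially"
    using r by blast
qed

definition wz :: "complex \<Rightarrow> nat \<Rightarrow> complex" where
  "wz s n = inverse (of_nat n powr s)"

lemma wz_mult: "wz s (m*n) = wz s m * wz s n"
  unfolding wz_def by (simp add: powr_times_real)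

lemma wz_1 [simp]: "wz s 1 = 1" and wz_0 [simp]: "wz s 0 = 0"
  by (simp_all add: wz_def)

lemma wz_alt: "n > 0 \<Longrightarrow> wz s n = of_nat n powr (-s)"
  unfolding wz_def by (simp add: powr_minus)

lemma norm_wz: "n > 0 \<Longrightarrow> norm (wz s n) = real n powr (- Re s)"
proof -
  assume n: "n > 0"
  have "norm (wz s n) = norm ((of_real (real n) :: complex) powr (-s))" using n by (simp add: wz_alt)
  also have "\<dots> = real n powr (- Re s)" by (subst norm_powr_real_powr) auto
  finally show ?thesis .
qed

lemma holo_wz [holomorphic_intros]: "(\<lambda>s. wz s n) holomorphic_on A"
proof (cases "n = 0")
  case True thus ?thesis by simp
next
  case False
  hence "(\<lambda>s. wz s n) = (\<lambda>s. of_nat n powr (-s))" by (simp add: wz_alt fun_eq_iff)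
  thus ?thesis by (simp add: holomorphic_intros)
qed

lemma D_term_af:
  assumes "h > 0"
  shows "D_term k h s m = af k (nat h) m * wz s m"
proof (cases "m = 0")
  case True thus ?thesis by (simp add: D_term_def wz_def)
next
  case False
  thus ?thesis using assms by (simp add: D_term_def af_def wz_def g_formula divide_inverse)
qed

definition wr :: "real \<Rightarrow> nat \<Rightarrow> real" where
  "wr \<sigma> n = real n powr (-\<sigma>)"

lemma wr_mult: "wr \<sigma> (m*n) = wr \<sigma> m * wr \<sigma> n"
  unfolding wr_def by (simp add: powr_mult)

lemma wr_1 [simp]: "wr \<sigma> 1 = 1" and wr_0 [simp]: "wr \<sigma> 0 = 0"
  by (simp_all add: wr_def)

lemma wr_Suc0 [simp]: "wr \<sigma> (Suc 0) = 1" by (simp add: wr_def)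

lemma wr_nonneg: "wr \<sigma> n \<ge> 0" by (simp add: wr_def)

lemma wr_prime_lt1:
  assumes "prime p" "\<sigma> > 0" shows "wr \<sigma> p < 1"
proof -
  have "real p > 1" using prime_gt_1_nat[OF assms(1)] by simp
  thus ?thesis unfolding wr_def using assms(2) by (intro powr_less_one) auto
qed

lemma wr_summable: "\<sigma> > 1 \<Longrightarrow> summable (wr \<sigma>)"
  unfolding wr_def by (subst summable_real_powr_iff) simp

lemma multf_one: "multf (\<lambda>n. 1::'a::comm_semiring_1)" by (simp add: multf_def)

lemma local_d_real:
  assumes "prime p" "\<sigma> > 0"
  shows "asm (\<lambda>a. real (divisor_fun j (p^a)) * wr \<sigma> p ^ a) UNIV \<and>
         infsetsum (\<lambda>a. real (divisor_fun j (p^a)) * wr \<sigma> p ^ a) UNIV = (1 / (1 - wr \<sigma> p)) ^ j"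
proof -
  have sm: "(\<lambda>a. real (divisor_fun j (p^a)) * wr \<sigma> p ^ a) sums (1 / (1 - wr \<sigma> p)) ^ j"
    by (rule dpow_sums_real[OF assms(1) wr_nonneg wr_prime_lt1[OF assms]])
  have nn: "(\<lambda>a. norm (real (divisor_fun j (p^a)) * wr \<sigma> p ^ a)) = (\<lambda>a. real (divisor_fun j (p^a)) * wr \<sigma> p ^ a)"
    using wr_nonneg[of \<sigma> p] by (simp add: abs_mult)
  have as: "asm (\<lambda>a. real (divisor_fun j (p^a)) * wr \<sigma> p ^ a) UNIV"
    unfolding abs_summable_on_nat_iff' nn using sums_summable[OF sm] .
  thus ?thesis using infsetsum_nat'[OF as] sums_unique[OF sm] by simp
qed

lemma local_one_real:
  assumes "prime p" "\<sigma> > 0"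
  shows "asm (\<lambda>a. 1 * wr \<sigma> p ^ a) UNIV \<and>
         infsetsum (\<lambda>a. 1 * wr \<sigma> p ^ a) UNIV = 1 / (1 - wr \<sigma> p)"
proof -
  have x: "0 \<le> wr \<sigma> p" "wr \<sigma> p < 1" using wr_nonneg wr_prime_lt1[OF assms] by auto
  have sm: "(\<lambda>a. wr \<sigma> p ^ a) sums (1 / (1 - wr \<sigma> p))" using geometric_sums[of "wr \<sigma> p"] x by simp
  have nn: "(\<lambda>a. norm (wr \<sigma> p ^ a)) = (\<lambda>a. wr \<sigma> p ^ a)" using x by (simp add: power_abs)
  have as: "asm (\<lambda>a. wr \<sigma> p ^ a) UNIV"
    unfolding abs_summable_on_nat_iff' nn using sums_summable[OF sm] .
  thus ?thesis using infsetsum_nat'[OF as] sums_unique[OF sm] by simp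
qed

lemma dsum_summable:
  assumes "\<sigma> > 1"
  shows "summable (\<lambda>n. real (divisor_fun j n) * wr \<sigma> n)"
proof -
  have w: "\<And>m n. wr \<sigma> (m*n) = wr \<sigma> m * wr \<sigma> n" "wr \<sigma> 1 = 1" by (simp_all add: wr_mult)
  have ws: "asm (\<lambda>n. 1 * wr \<sigma> n) UNIV"
    using wr_summable[OF assms] wr_nonneg by (simp add: abs_summable_on_nat_iff')
  define Z where "Z = infsetsum (\<lambda>n. 1 * wr \<sigma> n) UNIV"
  show ?thesis
  proof (rule summableI_nonneg_bounded)
    show "0 \<le> real (divisor_fun j n) * wr \<sigma> n" for n using wr_nonneg by simp
    fix N :: nat
    define P where "P = {p. prime p \<and> p < N}"
    have finP: "finite P" unfolding P_def by simp
    have FEd: "asm (\<lambda>n. real (divisor_fun j n) * wr \<sigma> n) (smooth P) \<and>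
       infsetsum (\<lambda>n. real (divisor_fun j n) * wr \<sigma> n) (smooth P) =
       (\<Prod>p\<in>P. infsetsum (\<lambda>a. real (divisor_fun j (p^a)) * wr \<sigma> p ^ a) UNIV)"
      by (rule FE[OF multf_divisor_fun w finP]) (use local_d_real assms in \<open>auto simp: P_def\<close>)
    have FE1: "asm (\<lambda>n. 1 * wr \<sigma> n) (smooth P) \<and>
       infsetsum (\<lambda>n. 1 * wr \<sigma> n) (smooth P) = (\<Prod>p\<in>P. infsetsum (\<lambda>a. 1 * wr \<sigma> p ^ a) UNIV)"
      by (rule FE[OF multf_one w finP]) (use local_one_real assms in \<open>auto simp: P_def\<close>)
    have "(\<Sum>n<N. real (divisor_fun j n) * wr \<sigma> n) = (\<Sum>n\<in>{n. 0 < n \<and> n < N}. real (divisor_fun j n) * wr \<sigma> n)"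
    proof (rule sum.mono_neutral_right)
      show "\<forall>i\<in>{..<N} - {n. 0 < n \<and> n < N}. real (divisor_fun j i) * wr \<sigma> i = 0"
      proof
        fix i assume "i \<in> {..<N} - {n. 0 < n \<and> n < N}"
        hence "i = 0" by auto
        thus "real (divisor_fun j i) * wr \<sigma> i = 0" by simp
      qed
    qed auto
    also have "\<dots> = infsetsum (\<lambda>n. real (divisor_fun j n) * wr \<sigma> n) {n. 0 < n \<and> n < N}" by simp
    also have "\<dots> \<le> infsetsum (\<lambda>n. real (divisor_fun j n) * wr \<sigma> n) (smooth P)"
    proof (rule infsetsum_mono_neutral_left)
      show "asm (\<lambda>n. real (divisor_fun j n) * wr \<sigma> n) {n. 0 < n \<and> n < N}" by simp
      show "asm (\<lambda>n. real (divisor_fun j n) * wr \<sigma> n) (smooth P)" using FEd by blast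
      show "{n. 0 < n \<and> n < N} \<subseteq> smooth P"
      proof
        fix n assume n: "n \<in> {n. 0 < n \<and> n < N}"
        have "q \<in> P" if "q \<in> prime_factors n" for q
        proof -
          have "prime q" "q dvd n" using that by (auto simp: in_prime_factors_iff)
          moreover have "q \<le> n" using \<open>q dvd n\<close> n by (intro dvd_imp_le) auto
          ultimately show ?thesis using n by (auto simp: P_def)
        qed
        thus "n \<in> smooth P" using n by (auto simp: smooth_def)
      qed
    qed (auto intro!: mult_nonneg_nonneg wr_nonneg)
    also have "\<dots> = (\<Prod>p\<in>P. (1 / (1 - wr \<sigma> p)) ^ j)"
      using FEd local_d_real assms by (simp add: P_def)
    also have "\<dots> = (\<Prod>p\<in>P. 1 / (1 - wr \<sigma> p)) ^ j" by (simp add: prod_power_distrib)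
    also have "(\<Prod>p\<in>P. 1 / (1 - wr \<sigma> p)) = infsetsum (\<lambda>n. 1 * wr \<sigma> n) (smooth P)"
      using FE1 local_one_real assms by (simp add: P_def)
    also have "infsetsum (\<lambda>n. 1 * wr \<sigma> n) (smooth P) \<le> Z"
      unfolding Z_def by (rule infsetsum_mono_neutral_left[OF _ ws]) (use FE1 wr_nonneg in auto)
    hence "(infsetsum (\<lambda>n. 1 * wr \<sigma> n) (smooth P)) ^ j \<le> Z ^ j"
      by (intro power_mono) (auto intro: infsetsum_nonneg wr_nonneg)
    finally show "(\<Sum>n<N. real (divisor_fun j n) * wr \<sigma> n) \<le> Z ^ j" .
  qed
qed

lemma norm_af_le:
  assumes "H > 0"
  shows "norm (af k H m) \<le> real H * real (divisor_fun (k-1) m)"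
proof -
  have "norm (af k H m) = real (divisor_fun (k-1) m) * gr H m"
    unfolding af_def using gr_nonneg[of H m] by (simp add: norm_mult)
  also have "\<dots> \<le> real (divisor_fun (k-1) m) * real H"
    by (intro mult_left_mono gr_bound assms) auto
  finally show ?thesis by (simp add: mult.commute)
qed

lemma goal1:
  assumes "h > 0" "Re s > 1"
  shows "summable (\<lambda>m. norm (D_term k h s m))"
proof (rule summable_comparison_test)
  show "summable (\<lambda>m. real (nat h) * (real (divisor_fun (k-1) m) * wr (Re s) m))"
    by (intro summable_mult dsum_summable assms)
  show "\<exists>N. \<forall>m\<ge>N. norm (norm (D_term k h s m)) \<le> real (nat h) * (real (divisor_fun (k-1) m) * wr (Re s) m)"
  proof (intro exI allI impI)
    fix m :: nat
    show "norm (norm (D_term k h s m)) \<le> real (nat h) * (real (divisor_fun (k-1) m) * wr (Re s) m)"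
    proof (cases "m = 0")
      case True thus ?thesis by (simp add: D_term_af[OF assms(1)])
    next
      case False
      have "norm (D_term k h s m) = norm (af k (nat h) m) * wr (Re s) m"
        using False by (simp add: D_term_af[OF assms(1)] norm_mult norm_wz wr_def)
      also have "\<dots> \<le> real (nat h) * real (divisor_fun (k-1) m) * wr (Re s) m"
        by (intro mult_right_mono norm_af_le wr_nonneg) (use assms in auto)
      finally show ?thesis by simp
    qed
  qed
qed

lemma dpow_sums_complex:
  fixes x :: complex
  assumes "prime p" "norm x < 1"
  shows "(\<lambda>a. of_nat (divisor_fun j (p^a)) * x^a) sums (1/(1-x))^j"
proof (induction j)
  case 0
  have "(\<lambda>a. of_nat (divisor_fun 0 (p^a)) * x^a) = (\<lambda>a. if a = 0 then 1 else 0)"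
    using assms by (auto simp: divisor_fun_0_primepow)
  thus ?case using sums_single[of 0 "\<lambda>_. 1::complex"] by simp
next
  case (Suc j)
  have g: "(\<lambda>i. x^i) sums (1/(1-x))" using geometric_sums[of x] assms by simp
  have s1: "summable (\<lambda>i. norm (x^i))"
    using assms(2) by (simp add: norm_power summable_geometric)
  have "(\<lambda>i. norm (of_nat (divisor_fun j (p^i)) * x^i)) = (\<lambda>i. real (divisor_fun j (p^i)) * norm x ^ i)"
    by (simp add: norm_mult norm_power)
  hence s2: "summable (\<lambda>i. norm (of_nat (divisor_fun j (p^i)) * x^i))"
    using sums_summable[OF dpow_sums_real[OF assms(1) norm_ge_zero assms(2)]] by simp
  have "(\<lambda>k. \<Sum>i\<le>k. x^i * (of_nat (divisor_fun j (p^(k-i))) * x^(k-i))) sums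
          ((\<Sum>i. x^i) * (\<Sum>i. of_nat (divisor_fun j (p^i)) * x^i))"
    using Cauchy_product_sums[OF s1 s2] by simp
  also have "(\<lambda>k. \<Sum>i\<le>k. x^i * (of_nat (divisor_fun j (p^(k-i))) * x^(k-i))) =
             (\<lambda>k. of_nat (divisor_fun (Suc j) (p^k)) * x^k)"
  proof
    fix k
    have "(\<Sum>i\<le>k. x^i * (of_nat (divisor_fun j (p^(k-i))) * x^(k-i))) =
          (\<Sum>i\<le>k. of_nat (divisor_fun j (p^(k-i))) * x^k)"
      by (intro sum.cong refl) (simp add: power_add[symmetric])
    also have "\<dots> = of_nat (divisor_fun (Suc j) (p^k)) * x^k"
      by (simp add: divisor_fun_Suc_primepow[OF assms(1)] sum_distrib_right)
    finally show "(\<Sum>i\<le>k. x^i * (of_nat (divisor_fun j (p^(k-i))) * x^(k-i))) =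
          of_nat (divisor_fun (Suc j) (p^k)) * x^k" .
  qed
  also have "(\<Sum>i. x^i) * (\<Sum>i. of_nat (divisor_fun j (p^i)) * x^i) = (1/(1-x))^Suc j"
    using sums_unique[OF g] sums_unique[OF Suc.IH] by simp
  finally show ?case .
qed

lemma norm_wz_pow: "p > 0 \<Longrightarrow> norm (wz s p ^ a) = wr (Re s) p ^ a"
  by (simp add: norm_power norm_wz wr_def)

lemma wr_antimono: "p > 0 \<Longrightarrow> \<sigma>1 \<le> \<sigma>2 \<Longrightarrow> wr \<sigma>2 p \<le> wr \<sigma>1 p"
  unfolding wr_def by (intro powr_mono) auto

lemma local_term_bound:
  assumes "H > 0" "p > 0" "Re s \<ge> \<sigma>"
  shows "norm (af k H (p^a) * wz s p ^ a) \<le> real H * (real (divisor_fun (k-1) (p^a)) * wr \<sigma> p ^ a)"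
proof -
  have "norm (af k H (p^a) * wz s p ^ a) = norm (af k H (p^a)) * wr (Re s) p ^ a"
    using assms by (simp add: norm_mult norm_wz_pow)
  also have "\<dots> \<le> (real H * real (divisor_fun (k-1) (p^a))) * wr \<sigma> p ^ a"
    by (intro mult_mono norm_af_le power_mono wr_antimono assms wr_nonneg zero_le_power) auto
  finally show ?thesis by simp
qed

lemma local_summable:
  assumes "H > 0" "prime p" "\<sigma> > 0"
  shows "summable (\<lambda>a. real H * (real (divisor_fun (k-1) (p^a)) * wr \<sigma> p ^ a))"
  using sums_summable[OF dpow_sums_real[OF assms(2) wr_nonneg wr_prime_lt1[OF assms(2,3)]]]
  by (intro summable_mult)

lemma local_norm_summable:
  assumes "H > 0" "prime p" "Re s > 0"
  shows "summable (\<lambda>a. norm (af k H (p^a) * wz s p ^ a))"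
proof -
  have bd: "norm (af k H (p^a) * wz s p ^ a) \<le> real H * (real (divisor_fun (k-1) (p^a)) * wr (Re s) p ^ a)" for a
    by (rule local_term_bound[OF assms(1) prime_gt_0_nat[OF assms(2)] order_refl])
  show ?thesis by (rule summable_comparison_test'[OF local_summable[OF assms(1,2,3), of k]]) (use bd in simp)
qed

definition Ep :: "nat \<Rightarrow> nat \<Rightarrow> complex \<Rightarrow> nat \<Rightarrow> complex" where
  "Ep k H s p = (\<Sum>a. af k H (p^a) * wz s p ^ a)"

lemma holo_Ep:
  assumes "H > 0" "prime p"
  shows "(\<lambda>s. Ep k H s p) holomorphic_on {s. Re s > 0}"
  unfolding Ep_def
proof (rule holo_series)
  show "open {s. Re s > 0}" by (simp add: open_halfspace_Re_gt)
  show "(\<lambda>s. af k H (p^a) * wz s p ^ a) holomorphic_on {s. Re s > 0}" for a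
    by (intro holomorphic_intros)
  fix z assume "z \<in> {s. Re s > (0::real)}"
  hence z: "Re z > 0" by simp
  have sub: "cball z (Re z / 2) \<subseteq> {s. Re s > 0}"
  proof
    fix w assume "w \<in> cball z (Re z / 2)"
    hence "\<bar>Re z - Re w\<bar> \<le> Re z / 2" using abs_Re_le_cmod[of "z - w"] by (simp add: dist_norm)
    thus "w \<in> {s. Re s > 0}" using z abs_ge_self[of "Re z - Re w"] by simp
  qed
  have bd: "norm (af k H (p^a) * wz w p ^ a) \<le> real H * (real (divisor_fun (k-1) (p^a)) * wr (Re z / 2) p ^ a)"
    if "w \<in> cball z (Re z / 2)" for w a
  proof (rule local_term_bound[OF assms(1)])
    show "p > 0" using assms prime_gt_0_nat by blast
    have "\<bar>Re z - Re w\<bar> \<le> Re z / 2" using that abs_Re_le_cmod[of "z - w"] by (simp add: dist_norm)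
    thus "Re z / 2 \<le> Re w" using abs_ge_self[of "Re z - Re w"] by linarith
  qed
  show "\<exists>r>0. cball z r \<subseteq> {s. Re s > 0} \<and> (\<exists>M. summable M \<and> (\<forall>n. \<forall>w\<in>cball z r. norm (af k H (p^n) * wz w p ^ n) \<le> M n))"
    using z sub bd local_summable[OF assms(1,2), of "Re z / 2" k]
    by (intro exI[of _ "Re z / 2"] conjI exI[of _ "\<lambda>a. real H * (real (divisor_fun (k-1) (p^a)) * wr (Re z / 2) p ^ a)"]) auto
qed

lemma af_primepow_ndvd:
  assumes "prime p" "\<not> p dvd H"
  shows "af k H (p^a) = (if a = 0 then 1 else of_nat (divisor_fun (k-1) (p^a)) * (1 - 1 / of_nat p))"
  using assms by (auto simp: af_def gr_primepow divisor_fun_one)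

lemma Ep_ndvd:
  assumes "prime p" "\<not> p dvd H" "Re s > 0"
  shows "Ep k H s p = (1 - 1 / of_nat p) * (1 / (1 - wz s p)) ^ (k-1) + 1 / of_nat p"
proof -
  define x where "x = wz s p"
  have x: "norm x < 1"
    unfolding x_def using assms wr_prime_lt1[OF assms(1), of "Re s"] norm_wz_pow[of p s 1]
    by (simp add: prime_gt_0_nat)
  have s1: "(\<lambda>a. (1 - 1 / of_nat p) * (of_nat (divisor_fun (k-1) (p^a)) * x^a)) sums
            ((1 - 1 / of_nat p) * (1 / (1 - x)) ^ (k-1))"
    by (intro sums_mult dpow_sums_complex assms x)
  have s2: "(\<lambda>a. if a = 0 then 1 / of_nat p else 0) sums (1 / (of_nat p :: complex))"
    using sums_single[of 0 "\<lambda>_. 1 / (of_nat p :: complex)"] by simp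
  have "(\<lambda>a. (1 - 1 / of_nat p) * (of_nat (divisor_fun (k-1) (p^a)) * x^a) + (if a = 0 then 1 / of_nat p else 0))
        sums ((1 - 1 / of_nat p) * (1 / (1 - x)) ^ (k-1) + 1 / of_nat p)"
    by (rule sums_add[OF s1 s2])
  moreover have "(\<lambda>a. (1 - 1 / of_nat p) * (of_nat (divisor_fun (k-1) (p^a)) * x^a) + (if a = 0 then 1 / of_nat p else 0))
        = (\<lambda>a. af k H (p^a) * x ^ a)"
    by (auto simp: af_primepow_ndvd[OF assms(1,2)] divisor_fun_one field_simps)
  ultimately show ?thesis unfolding Ep_def x_def by (simp add: sums_iff)
qed

lemma pow_sub_one_bound:
  fixes w :: complex
  assumes "norm w \<le> 1"
  shows "norm ((1 - w)^j - 1) \<le> real j * 2^j * norm w"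
proof (induction j)
  case 0 thus ?case by simp
next
  case (Suc j)
  have "(1 - w)^Suc j - 1 = (1 - w) * ((1 - w)^j - 1) - w" by (simp add: algebra_simps)
  hence "norm ((1 - w)^Suc j - 1) \<le> norm (1 - w) * norm ((1 - w)^j - 1) + norm w"
    by (metis norm_mult norm_triangle_ineq4)
  also have "norm (1 - w) \<le> 2" using norm_triangle_ineq4[of 1 w] assms by simp
  hence "norm (1 - w) * norm ((1 - w)^j - 1) \<le> 2 * (real j * 2^j * norm w)"
    by (intro mult_mono Suc.IH) auto
  also have "2 * (real j * 2^j * norm w) + norm w \<le> real (Suc j) * 2^Suc j * norm w"
  proof -
    have "(1::real) \<le> 2^Suc j" by (rule one_le_power) simp
    hence "norm w \<le> 2^Suc j * norm w" by (simp add: mult_le_cancel_right1)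
    thus ?thesis by (simp add: algebra_simps)
  qed
  finally show ?case by simp
qed

definition Fp :: "nat \<Rightarrow> nat \<Rightarrow> complex \<Rightarrow> nat \<Rightarrow> complex" where
  "Fp k H s n = (if prime n then Ep k H s n * (1 - wz s n) ^ (k-1) else 1)"

definition Ff :: "nat \<Rightarrow> nat \<Rightarrow> complex \<Rightarrow> complex" where
  "Ff k H s = prodinf (\<lambda>n. Fp k H s n)"

lemma norm_wz_prime_lt1: "prime p \<Longrightarrow> Re s > 0 \<Longrightarrow> norm (wz s p) < 1"
  using wr_prime_lt1[of p "Re s"] norm_wz_pow[of p s 1] by (simp add: prime_gt_0_nat)

lemma Fp_bound:
  assumes "prime p" "\<not> p dvd H" "Re s \<ge> 1/2"
  shows "norm (Fp k H s p - 1) \<le> real (k-1) * 2^(k-1) * real p powr (-3/2)"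
proof -
  define x where "x = wz s p"
  define j where "j = k - 1"
  have p0: "p > 0" using assms prime_gt_0_nat by blast
  have x: "norm x < 1" unfolding x_def using norm_wz_prime_lt1[OF assms(1)] assms(3) by simp
  hence x1: "1 - x \<noteq> 0" by auto
  have "Fp k H s p = ((1 - 1 / of_nat p) * (1 / (1 - x)) ^ j + 1 / of_nat p) * (1 - x) ^ j"
    unfolding Fp_def x_def j_def using assms by (simp add: Ep_ndvd)
  also have "\<dots> = (1 - 1 / of_nat p) * ((1 / (1 - x)) ^ j * (1 - x) ^ j) + (1 - x) ^ j / of_nat p"
    by (simp add: ring_distribs mult.assoc)
  also have "(1 / (1 - x)) ^ j * (1 - x) ^ j = 1" using x1 by (simp add: power_mult_distrib[symmetric])
  finally have Fe: "Fp k H s p = (1 - 1 / of_nat p) + (1 - x) ^ j / of_nat p" by simp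
  have Fm: "Fp k H s p - 1 = ((1 - x) ^ j - 1) / of_nat p"
  proof -
    have "Fp k H s p - 1 = (1 - x) ^ j / of_nat p - 1 / of_nat p" using Fe by simp
    also have "\<dots> = ((1 - x) ^ j - 1) / of_nat p" by (rule diff_divide_distrib[symmetric])
    finally show ?thesis .
  qed
  have nx: "norm x \<le> wr (1/2) p"
  proof -
    have "norm x = wr (Re s) p" unfolding x_def using norm_wz_pow[of p s 1] p0 by simp
    also have "\<dots> \<le> wr (1/2) p" by (rule wr_antimono[OF p0 assms(3)])
    finally show ?thesis .
  qed
  have pw: "wr (1/2) p / real p = real p powr (-3/2)"
  proof -
    have "real p powr (-(1/2) - 1) = real p powr (-(1/2)) / real p powr 1" by (rule powr_diff)
    moreover have "real p powr 1 = real p" by (rule powr_one) simp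
    moreover have "-(1/2) - 1 = (-3/2::real)" by simp
    ultimately show ?thesis unfolding wr_def by simp
  qed
  have "norm (Fp k H s p - 1) = norm ((1 - x) ^ j - 1) / real p" unfolding Fm by (simp add: norm_divide)
  also have "\<dots> \<le> (real j * 2^j * norm x) / real p"
    by (intro divide_right_mono pow_sub_one_bound) (use x in auto)
  also have "\<dots> \<le> (real j * 2^j * wr (1/2) p) / real p"
    by (intro divide_right_mono mult_left_mono nx) auto
  also have "\<dots> = real j * 2^j * (wr (1/2) p / real p)" by simp
  also have "\<dots> = real j * 2^j * real p powr (-3/2)" unfolding pw ..
  finally show ?thesis unfolding j_def .
qed

lemma Fp_bound_ev:
  assumes "H > 0" "Re s \<ge> 1/2" "n > H"
  shows "norm (Fp k H s n - 1) \<le> real (k-1) * 2^(k-1) * real n powr (-3/2)"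
proof (cases "prime n")
  case True
  have "\<not> n dvd H" using assms by (auto dest: dvd_imp_le)
  thus ?thesis using Fp_bound[OF True _ assms(2)] by simp
next
  case False thus ?thesis by (simp add: Fp_def)
qed

lemma summable_C_powr: "summable (\<lambda>n. C * real n powr (-3/2))"
  by (intro summable_mult) (simp add: summable_real_powr_iff)

lemma holo_Fp:
  assumes "H > 0"
  shows "(\<lambda>s. Fp k H s n) holomorphic_on {s. Re s > 0}"
proof (cases "prime n")
  case True
  hence "(\<lambda>s. Fp k H s n) = (\<lambda>s. Ep k H s n * (1 - wz s n) ^ (k-1))" by (simp add: Fp_def fun_eq_iff)
  thus ?thesis using holo_Ep[OF assms True] by (simp add: holomorphic_intros)
next
  case False
  hence "(\<lambda>s. Fp k H s n) = (\<lambda>s. 1)" by (simp add: Fp_def fun_eq_iff)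
  thus ?thesis by simp
qed

lemma Fp_abs_conv:
  assumes "H > 0" "Re s \<ge> 1/2"
  shows "convergent_prod (\<lambda>n. Fp k H s n)"
proof -
  have "summable (\<lambda>n. norm (Fp k H s n - 1))"
  proof (rule summable_comparison_test_ev[OF _ summable_C_powr])
    show "\<forall>\<^sub>F n in sequentially. norm (norm (Fp k H s n - 1)) \<le> real (k-1) * 2^(k-1) * real n powr (-3/2)"
      using eventually_gt_at_top[of H] by eventually_elim (use Fp_bound_ev assms in auto)
  qed
  thus ?thesis by (intro abs_convergent_prod_imp_convergent_prod summable_imp_abs_convergent_prod)
qed

lemma holo_Ff:
  assumes "H > 0"
  shows "Ff k H holomorphic_on {s. Re s > 1/2}"
proof -
  have "(\<lambda>s. prodinf (\<lambda>n. Fp k H s n)) holomorphic_on {s. Re s > 1/2}"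
  proof (rule holo_prod)
    show "open {s. Re s > (1/2::real)}" by (rule open_halfspace_Re_gt)
    show "(\<lambda>s. Fp k H s n) holomorphic_on {s. Re s > 1/2}" for n
      by (rule holomorphic_on_subset[OF holo_Fp[OF assms]]) auto
    fix z assume z: "z \<in> {s. Re s > (1/2::real)}"
    define r where "r = (Re z - 1/2) / 2"
    have r: "r > 0" using z by (simp add: r_def)
    have sub: "cball z r \<subseteq> {s. Re s > 1/2}"
    proof
      fix w assume "w \<in> cball z r"
      hence "\<bar>Re z - Re w\<bar> \<le> r" using abs_Re_le_cmod[of "z - w"] by (simp add: dist_norm)
      thus "w \<in> {s. Re s > 1/2}" using z abs_ge_self[of "Re z - Re w"] by (simp add: r_def)
    qed
    have ev: "\<forall>\<^sub>F n in sequentially. \<forall>w\<in>cball z r. norm (Fp k H w n - 1) \<le> real (k-1) * 2^(k-1) * real n powr (-3/2)"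
      using eventually_gt_at_top[of H]
    proof eventually_elim
      case (elim n)
      show ?case
      proof
        fix w assume "w \<in> cball z r"
        hence "Re w > 1/2" using sub by auto
        thus "norm (Fp k H w n - 1) \<le> real (k-1) * 2^(k-1) * real n powr (-3/2)"
          using Fp_bound_ev[OF assms _ elim] by simp
      qed
    qed
    show "\<exists>r>0. cball z r \<subseteq> {s. Re s > 1/2} \<and> (\<exists>M. summable M \<and>
               eventually (\<lambda>n. \<forall>w\<in>cball z r. norm (Fp k H w n - 1) \<le> M n) sequentially)"
      using r sub ev summable_C_powr by blast
  qed
  thus ?thesis unfolding Ff_def[abs_def] .
qed

lemma wz_one: "n > 0 \<Longrightarrow> wz 1 n = of_real (wr 1 n)"
  by (simp add: wz_def wr_def powr_minus)

lemma Ep_one_pos: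
  assumes "H > 0" "prime p"
  shows "\<exists>R. R \<ge> 1 \<and> Ep k H 1 p = of_real R"
proof -
  have p0: "p > 0" using assms prime_gt_0_nat by blast
  define t where "t a = real (divisor_fun (k-1) (p^a)) * gr H (p^a) * wr 1 p ^ a" for a
  have tt: "af k H (p^a) * wz 1 p ^ a = of_real (t a)" for a
    by (simp add: t_def af_def wz_one[OF p0])
  have tn: "t a \<ge> 0" for a unfolding t_def by (intro mult_nonneg_nonneg gr_nonneg zero_le_power wr_nonneg) auto
  have "summable (\<lambda>a. norm (af k H (p^a) * wz 1 p ^ a))"
    by (rule local_norm_summable[OF assms]) simp
  hence st: "summable t" using tt tn by simp
  have "Ep k H 1 p = of_real (suminf t)"
    unfolding Ep_def tt by (rule suminf_of_real[OF st, symmetric])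
  moreover have "1 \<le> suminf t"
  proof -
    have "sum t {..<1} \<le> suminf t" by (rule sum_le_suminf[OF st]) (use tn in auto)
    thus ?thesis by (simp add: t_def gr_one divisor_fun_one)
  qed
  ultimately show ?thesis by blast
qed

lemma Ff_1_nonzero:
  assumes "H > 0"
  shows "Ff k H 1 \<noteq> 0"
  unfolding Ff_def
proof (rule prodinf_nonzero)
  show "convergent_prod (\<lambda>n. Fp k H 1 n)" by (rule Fp_abs_conv[OF assms]) simp
  fix n show "Fp k H 1 n \<noteq> 0"
  proof (cases "prime n")
    case True
    obtain R where R: "R \<ge> 1" "Ep k H 1 n = of_real R" using Ep_one_pos[OF assms True] by blast
    have "norm (wz 1 n) < 1" using norm_wz_prime_lt1[OF True] by simp
    hence "1 - wz 1 n \<noteq> 0" by auto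
    thus ?thesis using R True by (simp add: Fp_def)
  qed (simp add: Fp_def)
qed

lemma wz_Suc0 [simp]: "wz s (Suc 0) = 1" using wz_1[of s] by simp

lemma prod_primes_lt:
  fixes N :: nat
  shows "(\<Prod>n<N. if prime n then g n else 1) = (\<Prod>p\<in>{p. prime p \<and> p < N}. g p)"
proof -
  have "(\<Prod>n<N. if prime n then g n else 1) = prod g {n\<in>{..<N}. prime n}"
    by (rule prod.inter_filter[symmetric]) simp
  also have "{n\<in>{..<N}. prime n} = {p. prime p \<and> p < N}" by auto
  finally show ?thesis .
qed

lemma conv_prod_lim:
  fixes f :: "nat \<Rightarrow> complex"
  assumes "convergent_prod f"
  shows "(\<lambda>N. \<Prod>n<N. f n) \<longlonglongrightarrow> prodinf f"
proof -
  have "(\<lambda>N. \<Prod>n\<le>N. f n) \<longlonglongrightarrow> prodinf f" by (rule convergent_prod_LIMSEQ[OF assms])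
  hence "(\<lambda>N. \<Prod>n<Suc N. f n) \<longlonglongrightarrow> prodinf f" by (simp add: lessThan_Suc_atMost)
  thus ?thesis by (rule LIMSEQ_imp_Suc)
qed

lemma euler_D:
  assumes "h > 0" "Re s > 1"
  shows "(\<lambda>N. \<Prod>p\<in>{p. prime p \<and> p < N}. Ep k (nat h) s p) \<longlonglongrightarrow> D_series k h s"
proof -
  have H: "nat h > 0" using assms by simp
  have w: "\<And>m n. wz s (m*n) = wz s m * wz s n" "wz s 1 = 1" "wz s 0 = 0" by (simp_all add: wz_mult)
  have glob: "asm (\<lambda>n. af k (nat h) n * wz s n) UNIV"
    unfolding abs_summable_on_nat_iff' using goal1[OF assms, of k] by (simp add: D_term_af[OF assms(1)])
  have Dt: "D_term k h s = (\<lambda>n. af k (nat h) n * wz s n)"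
    by (rule ext) (simp add: D_term_af[OF assms(1)])
  have gsum: "infsetsum (\<lambda>n. af k (nat h) n * wz s n) UNIV = D_series k h s"
    unfolding D_series_def Dt using infsetsum_nat'[OF glob] .
  have loc: "infsetsum (\<lambda>a. af k (nat h) (p^a) * wz s p ^ a) UNIV = Ep k (nat h) s p" if "prime p" for p
  proof -
    have "asm (\<lambda>a. af k (nat h) (p^a) * wz s p ^ a) UNIV"
      unfolding abs_summable_on_nat_iff' by (rule local_norm_summable[OF H that]) (use assms in simp)
    thus ?thesis unfolding Ep_def by (rule infsetsum_nat')
  qed
  have "(\<lambda>N. \<Prod>p\<in>{p. prime p \<and> p < N}. infsetsum (\<lambda>a. af k (nat h) (p^a) * wz s p ^ a) UNIV)
           \<longlonglongrightarrow> infsetsum (\<lambda>n. af k (nat h) n * wz s n) UNIV"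
    by (rule euler_limit[OF multf_af w glob])
  also have "(\<lambda>N. \<Prod>p\<in>{p. prime p \<and> p < N}. infsetsum (\<lambda>a. af k (nat h) (p^a) * wz s p ^ a) UNIV) =
             (\<lambda>N. \<Prod>p\<in>{p. prime p \<and> p < N}. Ep k (nat h) s p)"
    by (intro ext prod.cong refl) (simp add: loc)
  finally show ?thesis unfolding gsum .
qed

lemma zeta_wz: "zeta_dirichlet s = (\<Sum>n. wz s n)"
proof -
  have "(\<lambda>n. if n = 0 then 0 else 1 / (of_nat n powr s)) = wz s"
    by (auto simp: wz_def fun_eq_iff divide_inverse)
  thus ?thesis unfolding zeta_dirichlet_def by simp
qed

lemma euler_zeta:
  assumes "Re s > 1"
  shows "(\<lambda>N. \<Prod>p\<in>{p. prime p \<and> p < N}. 1 / (1 - wz s p)) \<longlonglongrightarrow> zeta_dirichlet s"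
proof -
  have w: "\<And>m n. wz s (m*n) = wz s m * wz s n" "wz s 1 = 1" "wz s 0 = 0" by (simp_all add: wz_mult)
  have nw: "norm (1 * wz s n) = wr (Re s) n" for n
    by (cases "n = 0") (auto simp: norm_wz wr_def)
  have glob: "asm (\<lambda>n. 1 * wz s n) UNIV"
    unfolding abs_summable_on_nat_iff' nw using wr_summable assms by simp
  have gsum: "infsetsum (\<lambda>n. 1 * wz s n) UNIV = zeta_dirichlet s"
    using infsetsum_nat'[OF glob] by (simp add: zeta_wz)
  have loc: "infsetsum (\<lambda>a. wz s p ^ a) UNIV = 1 / (1 - wz s p)" if "prime p" for p
  proof -
    have x: "norm (wz s p) < 1" using norm_wz_prime_lt1[OF that] assms by simp
    have sm: "(\<lambda>a. wz s p ^ a) sums (1 / (1 - wz s p))" using geometric_sums[OF x] by simp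
    have "summable (\<lambda>a. norm (wz s p ^ a))" using x by (simp add: norm_power summable_geometric)
    hence as: "asm (\<lambda>a. wz s p ^ a) UNIV" unfolding abs_summable_on_nat_iff' .
    show ?thesis using infsetsum_nat'[OF as] sums_unique[OF sm] by simp
  qed
  have "(\<lambda>N. \<Prod>p\<in>{p. prime p \<and> p < N}. infsetsum (\<lambda>a. 1 * wz s p ^ a) UNIV)
           \<longlonglongrightarrow> infsetsum (\<lambda>n. 1 * wz s n) UNIV"
    by (rule euler_limit[OF multf_one w glob])
  also have "(\<lambda>N. \<Prod>p\<in>{p. prime p \<and> p < N}. infsetsum (\<lambda>a. 1 * wz s p ^ a) UNIV) =
             (\<lambda>N. \<Prod>p\<in>{p. prime p \<and> p < N}. 1 / (1 - wz s p))"
    by (intro ext prod.cong refl) (simp add: loc)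
  finally show ?thesis unfolding gsum .
qed

lemma F_eq_D_zeta:
  assumes "h > 0" "Re s > 1"
  shows "zeta_dirichlet s \<noteq> 0 \<and> Ff k (nat h) s = D_series k h s / zeta_dirichlet s ^ (k-1)"
proof -
  define H where "H = nat h"
  have H: "H > 0" using assms by (simp add: H_def)
  define g where "g n = (if prime n then 1 - wz s n else 1)" for n
  have wlt: "norm (wz s p) < 1" if "prime p" for p using norm_wz_prime_lt1[OF that] assms by simp
  have gconv: "convergent_prod g"
  proof -
    have "summable (\<lambda>n. norm (g n - 1))"
    proof (rule summable_comparison_test'[OF wr_summable[OF assms(2)]])
      fix n show "norm (norm (g n - 1)) \<le> wr (Re s) n"
        by (cases "n = 0") (auto simp: g_def norm_wz wr_def)
    qed
    thus ?thesis by (intro abs_convergent_prod_imp_convergent_prod summable_imp_abs_convergent_prod)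
  qed
  define M where "M = prodinf g"
  have Mnz: "M \<noteq> 0" unfolding M_def
  proof (rule prodinf_nonzero[OF gconv])
    fix n show "g n \<noteq> 0"
    proof (cases "prime n")
      case True
      have "wz s n \<noteq> 1" using wlt[OF True] by auto
      thus ?thesis using True by (simp add: g_def)
    qed (simp add: g_def)
  qed
  have QM: "(\<lambda>N. \<Prod>p\<in>{p. prime p \<and> p < N}. 1 - wz s p) \<longlonglongrightarrow> M"
    using conv_prod_lim[OF gconv] unfolding M_def g_def prod_primes_lt .
  have Z: "(\<lambda>N. \<Prod>p\<in>{p. prime p \<and> p < N}. 1 / (1 - wz s p)) \<longlonglongrightarrow> zeta_dirichlet s"
    by (rule euler_zeta[OF assms(2)])
  have one: "(\<Prod>p\<in>{p. prime p \<and> p < N}. 1 - wz s p) * (\<Prod>p\<in>{p. prime p \<and> p < N}. 1 / (1 - wz s p)) = 1" for N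
  proof -
    have "(\<Prod>p\<in>{p. prime p \<and> p < N}. 1 - wz s p) * (\<Prod>p\<in>{p. prime p \<and> p < N}. 1 / (1 - wz s p)) =
          (\<Prod>p\<in>{p. prime p \<and> p < N}. (1 - wz s p) * (1 / (1 - wz s p)))" by (rule prod.distrib[symmetric])
    also have "\<dots> = (\<Prod>p\<in>{p. prime p \<and> p < N}. 1)"
    proof (intro prod.cong refl)
      fix p assume "p \<in> {p. prime p \<and> p < N}"
      hence "1 - wz s p \<noteq> 0" using wlt[of p] by auto
      thus "(1 - wz s p) * (1 / (1 - wz s p)) = 1" by simp
    qed
    finally show ?thesis by simp
  qed
  have "(\<lambda>N. (\<Prod>p\<in>{p. prime p \<and> p < N}. 1 - wz s p) * (\<Prod>p\<in>{p. prime p \<and> p < N}. 1 / (1 - wz s p)))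
        \<longlonglongrightarrow> M * zeta_dirichlet s" by (rule tendsto_mult[OF QM Z])
  hence "(\<lambda>N. 1::complex) \<longlonglongrightarrow> M * zeta_dirichlet s" unfolding one .
  hence Mz: "M * zeta_dirichlet s = 1" using LIMSEQ_unique tendsto_const by metis
  hence znz: "zeta_dirichlet s \<noteq> 0" by auto
  have "(\<lambda>N. (\<Prod>p\<in>{p. prime p \<and> p < N}. Ep k H s p) * (\<Prod>p\<in>{p. prime p \<and> p < N}. 1 - wz s p) ^ (k-1))
        \<longlonglongrightarrow> D_series k h s * M ^ (k-1)"
    by (intro tendsto_mult tendsto_power QM) (use euler_D[OF assms] in \<open>simp add: H_def\<close>)
  also have "(\<lambda>N. (\<Prod>p\<in>{p. prime p \<and> p < N}. Ep k H s p) * (\<Prod>p\<in>{p. prime p \<and> p < N}. 1 - wz s p) ^ (k-1)) =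
             (\<lambda>N. \<Prod>n<N. Fp k H s n)"
  proof
    fix N
    have "(\<Prod>n<N. Fp k H s n) = (\<Prod>p\<in>{p. prime p \<and> p < N}. Ep k H s p * (1 - wz s p) ^ (k-1))"
      unfolding Fp_def prod_primes_lt ..
    also have "\<dots> = (\<Prod>p\<in>{p. prime p \<and> p < N}. Ep k H s p) * (\<Prod>p\<in>{p. prime p \<and> p < N}. 1 - wz s p) ^ (k-1)"
      by (simp add: prod.distrib prod_power_distrib)
    finally show "(\<Prod>p\<in>{p. prime p \<and> p < N}. Ep k H s p) * (\<Prod>p\<in>{p. prime p \<and> p < N}. 1 - wz s p) ^ (k-1) =
                  (\<Prod>n<N. Fp k H s n)" by simp
  qed
  finally have l1: "(\<lambda>N. \<Prod>n<N. Fp k H s n) \<longlonglongrightarrow> D_series k h s * M ^ (k-1)" .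
  have l2: "(\<lambda>N. \<Prod>n<N. Fp k H s n) \<longlonglongrightarrow> Ff k H s"
    unfolding Ff_def by (rule conv_prod_lim[OF Fp_abs_conv[OF H]]) (use assms in simp)
  have "Ff k H s = D_series k h s * M ^ (k-1)" using LIMSEQ_unique[OF l2 l1] .
  also have "M = 1 / zeta_dirichlet s" using Mz znz by (simp add: field_simps)
  finally show ?thesis using znz by (simp add: H_def power_inverse divide_inverse)
qed

lemma seg_real:
  assumes "z \<in> closed_segment (complex_of_real a) (of_real (a+1))"
  shows "\<exists>t. z = of_real t \<and> a \<le> t \<and> t \<le> a + 1"
proof -
  from assms obtain u where u: "0 \<le> u" "u \<le> 1" "z = (1 - u) *\<^sub>R complex_of_real a + u *\<^sub>R of_real (a+1)"
    unfolding closed_segment_def by blast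
  have "z = of_real (a + u)" using u(3) by (simp add: scaleR_conv_of_real algebra_simps)
  thus ?thesis using u by (intro exI[of _ "a + u"]) auto
qed

lemma u_bound:
  fixes s :: complex and a :: real
  assumes a: "a \<ge> 1" and sp: "Re s \<ge> 0"
  shows "norm ((s - 1) * of_real a powr (-s) - of_real a powr (1 - s) + of_real (a+1) powr (1 - s))
           \<le> norm s * norm (s - 1) * a powr (- Re s - 1)"
proof -
  define S where "S = closed_segment (complex_of_real a) (of_real (a+1))"
  define A where "A = complex_of_real a powr (-s)"
  define C where "C = norm s * a powr (- Re s - 1)"
  have cvx: "convex S" unfolding S_def by simp
  have aS: "complex_of_real a \<in> S" and a1S: "complex_of_real (a+1) \<in> S" unfolding S_def by auto
  have nn: "z \<notin> \<real>\<^sub>\<le>\<^sub>0" if "z \<in> S" for z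
    using seg_real[OF that[unfolded S_def]] a by (auto simp: complex_nonpos_Reals_iff)
  have npow: "norm (z powr w) \<le> a powr Re w" if zS: "z \<in> S" and rw: "Re w \<le> 0" for z w
  proof -
    obtain t where t: "z = of_real t" "a \<le> t" "t \<le> a + 1" using seg_real[OF zS[unfolded S_def]] by blast
    have "norm (z powr w) = t powr Re w" using t a by (subst norm_powr_real_powr) auto
    also have "\<dots> \<le> a powr Re w" by (rule powr_mono2') (use t a rw in auto)
    finally show ?thesis .
  qed
  have zdist: "norm (z - of_real a) \<le> 1" if zS: "z \<in> S" for z
  proof -
    obtain t where t: "z = of_real t" "a \<le> t" "t \<le> a + 1" using seg_real[OF zS[unfolded S_def]] by blast
    thus ?thesis by (simp add: norm_of_real flip: of_real_diff)
  qed
  have stepA: "norm (z powr (-s) - A) \<le> C * norm (z - of_real a)" if "z \<in> S" for z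
    unfolding A_def C_def
  proof (rule field_differentiable_bound[OF cvx _ _ that aS])
    fix x assume x: "x \<in> S"
    show "((\<lambda>z. z powr (-s)) has_field_derivative ((-s) * x powr (-s - 1))) (at x within S)"
      by (rule has_field_derivative_at_within[OF has_field_derivative_powr[OF nn[OF x]]])
    have "norm ((-s) * x powr (-s - 1)) = norm s * norm (x powr (-s - 1))" by (simp add: norm_mult)
    also have "\<dots> \<le> norm s * a powr Re (-s - 1)" by (intro mult_left_mono npow x) (use sp in auto)
    finally show "norm ((-s) * x powr (-s - 1)) \<le> norm s * a powr (- Re s - 1)" by simp
  qed
  define chi where "chi z = z powr (1 - s) - (1 - s) * A * z" for z
  have dchi: "(chi has_field_derivative ((1 - s) * (x powr (-s) - A))) (at x within S)" if x: "x \<in> S" for x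
  proof -
    have "((\<lambda>z. z powr (1 - s)) has_field_derivative ((1 - s) * x powr (1 - s - 1))) (at x)"
      by (rule has_field_derivative_powr[OF nn[OF x]])
    moreover have "((\<lambda>z. (1 - s) * A * z) has_field_derivative ((1 - s) * A)) (at x)"
      using DERIV_cmult_Id[of "(1 - s) * A" x] by simp
    ultimately have "(chi has_field_derivative ((1 - s) * x powr (1 - s - 1) - (1 - s) * A)) (at x)"
      unfolding chi_def[abs_def] by (rule DERIV_diff)
    hence "(chi has_field_derivative ((1 - s) * (x powr (-s) - A))) (at x)"
      by (simp add: algebra_simps)
    thus ?thesis by (rule has_field_derivative_at_within)
  qed
  have "norm (chi (of_real (a+1)) - chi (of_real a)) \<le> (norm (1 - s) * C) * norm (complex_of_real (a+1) - of_real a)"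
  proof (rule field_differentiable_bound[OF cvx dchi _ a1S aS])
    fix x assume x: "x \<in> S"
    have "norm ((1 - s) * (x powr (-s) - A)) = norm (1 - s) * norm (x powr (-s) - A)" by (simp add: norm_mult)
    also have "\<dots> \<le> norm (1 - s) * (C * norm (x - of_real a))" by (intro mult_left_mono stepA x) auto
    also have "\<dots> \<le> norm (1 - s) * (C * 1)"
      by (intro mult_left_mono zdist x) (auto simp: C_def)
    finally show "norm ((1 - s) * (x powr (-s) - A)) \<le> norm (1 - s) * C" by simp
  qed
  also have "norm (complex_of_real (a+1) - of_real a) = 1" by (simp flip: of_real_diff)
  also have "chi (of_real (a+1)) - chi (of_real a) =
             (s - 1) * of_real a powr (-s) - of_real a powr (1 - s) + of_real (a+1) powr (1 - s)"
    unfolding chi_def A_def by (simp add: algebra_simps)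
  also have "norm (1 - s) * C * 1 = norm s * norm (s - 1) * a powr (- Re s - 1)"
    unfolding C_def by (simp add: norm_minus_commute)
  finally show ?thesis .
qed

definition uu :: "nat \<Rightarrow> complex \<Rightarrow> complex" where
  "uu n s = (s - 1) * of_nat (Suc n) powr (-s) - of_nat (Suc n) powr (1 - s) + of_nat (Suc (Suc n)) powr (1 - s)"

definition Wz :: "complex \<Rightarrow> complex" where
  "Wz s = (\<Sum>n. uu n s)"

lemma uu_bound:
  assumes "Re s \<ge> 0"
  shows "norm (uu n s) \<le> norm s * norm (s - 1) * real (Suc n) powr (- Re s - 1)"
proof -
  have e1: "complex_of_real (real (Suc n)) = of_nat (Suc n)" by simp
  have e2: "complex_of_real (real (Suc n) + 1) = of_nat (Suc (Suc n))" by simp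
  show ?thesis using u_bound[of "real (Suc n)" s] assms unfolding uu_def e1 e2 by simp
qed

lemma summable_Suc_powr: "summable (\<lambda>n. C * real (Suc n) powr (-3/2))"
proof -
  have "summable (\<lambda>n. real n powr (-3/2))" by (simp add: summable_real_powr_iff)
  hence "summable (\<lambda>n. real (Suc n) powr (-3/2))" by (subst summable_Suc_iff)
  thus ?thesis by (rule summable_mult)
qed

lemma holo_Wz: "Wz holomorphic_on {s. Re s > 1/2}"
proof -
  have "(\<lambda>s. \<Sum>n. uu n s) holomorphic_on {s. Re s > 1/2}"
  proof (rule holo_series)
    show "open {s. Re s > (1/2::real)}" by (rule open_halfspace_Re_gt)
    show "uu n holomorphic_on {s. Re s > 1/2}" for n
      unfolding uu_def[abs_def] by (intro holomorphic_intros)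
    fix z assume z: "z \<in> {s. Re s > (1/2::real)}"
    define r where "r = (Re z - 1/2) / 2"
    have r: "r > 0" using z by (simp add: r_def)
    have sub: "cball z r \<subseteq> {s. Re s > 1/2}"
    proof
      fix w assume "w \<in> cball z r"
      hence "\<bar>Re z - Re w\<bar> \<le> r" using abs_Re_le_cmod[of "z - w"] by (simp add: dist_norm)
      thus "w \<in> {s. Re s > 1/2}" using z abs_ge_self[of "Re z - Re w"] by (simp add: r_def)
    qed
    define C where "C = (norm z + r) * (norm z + r + 1)"
    have bd: "norm (uu n w) \<le> C * real (Suc n) powr (-3/2)" if w: "w \<in> cball z r" for n w
    proof -
      have rw: "Re w > 1/2" using sub w by auto
      have nw: "norm w \<le> norm z + r"
        using w norm_triangle_ineq2[of w z] by (simp add: dist_norm norm_minus_commute)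
      have nw1: "norm (w - 1) \<le> norm z + r + 1"
        using nw norm_triangle_ineq4[of w 1] by simp
      have "norm (uu n w) \<le> norm w * norm (w - 1) * real (Suc n) powr (- Re w - 1)"
        by (rule uu_bound) (use rw in simp)
      also have "\<dots> \<le> ((norm z + r) * (norm z + r + 1)) * real (Suc n) powr (-3/2)"
      proof (intro mult_mono nw nw1)
        show "real (Suc n) powr (- Re w - 1) \<le> real (Suc n) powr (-3/2)"
          by (rule powr_mono) (use rw in auto)
      qed (use r in auto)
      finally show ?thesis unfolding C_def .
    qed
    show "\<exists>r>0. cball z r \<subseteq> {s. Re s > 1/2} \<and> (\<exists>M. summable M \<and> (\<forall>n. \<forall>w\<in>cball z r. norm (uu n w) \<le> M n))"
      using r sub bd summable_Suc_powr[of C] by blast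
  qed
  thus ?thesis unfolding Wz_def[abs_def] .
qed

lemma Wz_eq:
  assumes "Re s > 1"
  shows "Wz s = (s - 1) * zeta_dirichlet s - 1"
proof -
  have nw: "norm (wz s n) = wr (Re s) n" for n
    by (cases "n = 0") (auto simp: norm_wz wr_def)
  have sw: "summable (wz s)"
    by (rule summable_norm_cancel) (use wr_summable[OF assms] nw in simp)
  have "wz s sums zeta_dirichlet s" using sw by (simp add: zeta_wz summable_sums)
  hence "(\<lambda>n. wz s (Suc n)) sums zeta_dirichlet s" by (subst sums_Suc_iff) simp
  hence s1: "(\<lambda>n. (s - 1) * of_nat (Suc n) powr (-s)) sums ((s - 1) * zeta_dirichlet s)"
    by (intro sums_mult) (simp add: wz_alt)
  define x where "x n = (of_nat (Suc n) :: complex) powr (1 - s)" for n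
  have "(\<lambda>n. of_nat (Suc n) powr (1 - s)) \<longlonglongrightarrow> (0::complex)"
    by (rule tendsto_neg_powr_complex_of_nat[OF filterlim_Suc]) (use assms in simp)
  hence "x \<longlonglongrightarrow> 0" unfolding x_def .
  hence s2: "(\<lambda>n. x (Suc n) - x n) sums (0 - x 0)" by (rule telescope_sums)
  have "(\<lambda>n. (s - 1) * of_nat (Suc n) powr (-s) + (x (Suc n) - x n)) sums ((s - 1) * zeta_dirichlet s + (0 - x 0))"
    by (rule sums_add[OF s1 s2])
  moreover have "(\<lambda>n. (s - 1) * of_nat (Suc n) powr (-s) + (x (Suc n) - x n)) = (\<lambda>n. uu n s)"
    by (rule ext) (simp add: uu_def x_def algebra_simps)
  moreover have "x 0 = 1" by (simp add: x_def)
  ultimately show ?thesis unfolding Wz_def by (simp add: sums_iff)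
qed

lemma Wz_1: "Wz 1 = 0"
proof -
  have "uu n 1 = 0" for n by (simp add: uu_def del: of_nat_Suc)
  thus ?thesis by (simp add: Wz_def)
qed

theorem mainTheorem10:
  fixes k :: nat and h :: int
  assumes "k \<ge> 2" and "h > 0"
  shows "(\<forall>s. Re s > 1 \<longrightarrow> summable (\<lambda>m. norm (D_term k h s m)))
    \<and> (\<exists>F. F holomorphic_on {s. Re s > 1/2} \<and> F 1 \<noteq> 0 \<and>
          (\<forall>s. Re s > 1 \<longrightarrow> F s = D_series k h s / zeta_dirichlet s ^ (k - 1)))
    \<and> (\<exists>G. G holomorphic_on ({s. Re s > 1/2} - {1}) \<and>
          (\<forall>s. Re s > 1 \<longrightarrow> G s = D_series k h s) \<and>
          is_pole G 1 \<and> zorder G 1 = - int (k - 1))"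
proof (intro conjI allI impI)
  have H: "nat h > 0" using assms by simp
  define S where "S = {s. Re s > (1/2::real)}"
  have S1: "open S" unfolding S_def by (rule open_halfspace_Re_gt)
  have S2: "1 \<in> S" unfolding S_def by simp
  note S = S1 S2
  fix s :: complex assume "Re s > 1"
  thus "summable (\<lambda>m. norm (D_term k h s m))" by (rule goal1[OF assms(2)])
next
  have H: "nat h > 0" using assms by simp
  show "\<exists>F. F holomorphic_on {s. Re s > 1/2} \<and> F 1 \<noteq> 0 \<and>
          (\<forall>s. Re s > 1 \<longrightarrow> F s = D_series k h s / zeta_dirichlet s ^ (k - 1))"
    using holo_Ff[OF H, of k] Ff_1_nonzero[OF H, of k] F_eq_D_zeta[OF assms(2)]
    by (intro exI[of _ "Ff k (nat h)"]) auto
next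
  have H: "nat h > 0" using assms by simp
  define S where "S = {s. Re s > (1/2::real)}"
  have S1: "open S" unfolding S_def by (rule open_halfspace_Re_gt)
  have S2: "1 \<in> S" unfolding S_def by simp
  note S = S1 S2
  define K where "K s = Ff k (nat h) s * (1 + Wz s) ^ (k - 1)" for s
  define G where "G s = K s / (s - 1) ^ (k - 1)" for s
  have Khol: "K holomorphic_on S"
    unfolding K_def[abs_def] S_def using holo_Ff[OF H, of k] holo_Wz by (intro holomorphic_intros) auto
  have K1: "K 1 \<noteq> 0" unfolding K_def using Ff_1_nonzero[OF H, of k] by (simp add: Wz_1)
  have kpos: "k - 1 > 0" using assms by simp
  have "G holomorphic_on (S - {1})"
    unfolding G_def[abs_def] by (intro holomorphic_intros holomorphic_on_subset[OF Khol]) auto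
  moreover have "\<forall>s. Re s > 1 \<longrightarrow> G s = D_series k h s"
  proof (intro allI impI)
    fix s :: complex assume s: "Re s > 1"
    have s1: "s - 1 \<noteq> 0" using s by auto
    obtain znz: "zeta_dirichlet s \<noteq> 0" and Feq: "Ff k (nat h) s = D_series k h s / zeta_dirichlet s ^ (k-1)"
      using F_eq_D_zeta[OF assms(2) s] by blast
    have "1 + Wz s = (s - 1) * zeta_dirichlet s" using Wz_eq[OF s] by simp
    hence "G s = Ff k (nat h) s * ((s - 1) * zeta_dirichlet s) ^ (k - 1) / (s - 1) ^ (k - 1)"
      unfolding G_def K_def by simp
    also have "\<dots> = Ff k (nat h) s * zeta_dirichlet s ^ (k - 1)"
      using s1 by (simp add: power_mult_distrib)
    also have "\<dots> = D_series k h s" using znz Feq by simp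
    finally show "G s = D_series k h s" .
  qed
  moreover have "is_pole G 1"
    unfolding G_def[abs_def] by (rule is_pole_basic[OF Khol S(1) S(2) K1 kpos])
  moreover have "zorder G 1 = - int (k - 1)"
  proof (rule zorder_eqI[OF S(1) S(2) Khol K1])
    fix w assume "w \<in> S" "w \<noteq> 1"
    thus "G w = K w * (w - 1) powi (- int (k - 1))"
      unfolding G_def by (simp add: power_int_minus divide_inverse)
  qed
  ultimately show "\<exists>G. G holomorphic_on ({s. Re s > 1/2} - {1}) \<and>
          (\<forall>s. Re s > 1 \<longrightarrow> G s = D_series k h s) \<and>
          is_pole G 1 \<and> zorder G 1 = - int (k - 1)"
    unfolding S_def by blast
qed

end
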